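(* Let $1<S\le N$, $L$ a band-width vector, $\dot W$ an $L$-admissible matrix, $W_\varepsilon=\mathrm{Id}+\varepsilon\dot W$, $k\in\mathbb N$, $\beta\in\Gamma$, $P_{\varepsilon,\beta}=D_{k,\beta,L}W_\varepsilon$ and $\hat P_\beta=D_{k,\beta,L}\hat W_L$. Let $\gamma_0>0$ be such that $P_{\varepsilon,\beta}$ has $N$ distinct eigenvalues $\lambda^{(1)}_\varepsilon,\dots,\lambda^{(N)}_\varepsilon$ for $0<\varepsilon<\gamma_0$, labelled so that each $\varepsilon\mapsto\lambda^{(\ell)}_\varepsilon$ is continuous and $\lambda^{(\ell)}_\varepsilon\to e^{-2\pi ik\beta_s}$ whenever $\ell\in B_s$. Let $\{f^{(1)},\dots,f^{(N)}\}$ be an orthonormal eigenbasis of $\hat P_\beta$ such that for every $\ell$ and any unit eigenvector $g^{(\ell)}_\varepsilon$ of $P_{\varepsilon,\beta}$ for $\lambda^{(\ell)}_\varepsilon$, $\min_{\theta}\|g^{(\ell)}_\varepsilon-e^{i\theta}f^{(\ell)}\|\to0$ as $\varepsilon\to0$. Then there exist $\gamma>0$ and, for each $0<\varepsilon<\gamma$, a unit-norm eigenbasis $f^{(1)}_\varepsilon,\dots,f^{(N)}_\varepsilon$ of $P_{\varepsilon,\beta}$ with $P_{\varepsilon,\beta}f^{(\ell)}_\varepsilon=\lambda^{(\ell)}_\varepsilon f^{(\ell)}_\varepsilon$, such that for every $\ell\in\{1,\dots,N\}$: (i) the map $\varepsilon\in(0,\gamma)\mapsto f^{(\ell)}_\varepsilon\in\mathbb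 C^N$ is $C^\infty$; and (ii) $f^{(\ell)}_\varepsilon\to f^{(\ell)}$ in $\mathbb C^N$ as $\varepsilon\to0$.
   Context: A band-width vector is $L=(L_1,\dots,L_S)$ of positive integers with $\sum_sL_s=N$; $N_0=0$, $N_s=N_{s-1}+L_s$, $B_s=\{j:N_{s-1}<j\le N_s\}$. $D_{k,\beta,L}$ is the diagonal matrix with $j$-th entry $e^{-2\pi ik\beta_s}$ for $j\in B_s$. $\dot W$ is $L$-admissible if it is real symmetric and (1) $\dot W_{ij}\ge0$ for $i\ne j$, $\sum_j\dot W_{ij}=0$ for all $i$; (2) $\dot W$ has $N$ distinct eigenvalues; (3) each $\hat W_s=(\dot W_{jk})_{j,k\in B_s}$ has $L_s$ distinct eigenvalues. $\hat W_L$ is block diagonal with blocks $\hat W_1,\dots,\hat W_S$. $\Gamma=\{\beta\in\mathbb R^S: e^{-2\pi ik\beta_{s_1}}\neq e^{-2\pi ik\beta_{s_2}}\text{ for all }k\ne0,\ s_1\ne s_2\}$. *)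

theory Defs
  imports "HOL-Analysis.Analysis"
begin

text \<open>Conventions: indices are 1-based natural numbers. Vectors in C^N are functions nat => complex, of which
  only the values on {1..N} matter; N x N matrices are functions nat => nat => complex
  of which only the entries on {1..N} x {1..N} matter.\<close>

definition Ncum :: "(nat \<Rightarrow> nat) \<Rightarrow> nat \<Rightarrow> nat" where
  "Ncum L s = (\<Sum>t\<in>{1..s}. L t)"

definition blk :: "(nat \<Rightarrow> nat) \<Rightarrow> nat \<Rightarrow> nat set" where
  "blk L s = {Ncum L (s - 1) <.. Ncum L s}"

definition band_width :: "nat \<Rightarrow> (nat \<Rightarrow> nat) \<Rightarrow> nat \<Rightarrow> bool" where
  "band_width S L N \<longleftrightarrow> S \<ge> 1 \<and> (\<forall>s\<in>{1..S}. L s > 0) \<and> Ncum L S = N"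

definition is_eigvec :: "nat set \<Rightarrow> (nat \<Rightarrow> nat \<Rightarrow> complex) \<Rightarrow> complex \<Rightarrow> (nat \<Rightarrow> complex) \<Rightarrow> bool" where
  "is_eigvec I A \<mu> v \<longleftrightarrow> (\<exists>j\<in>I. v j \<noteq> 0) \<and> (\<forall>i\<in>I. (\<Sum>j\<in>I. A i j * v j) = \<mu> * v i)"

definition eigenvalues_on :: "nat set \<Rightarrow> (nat \<Rightarrow> nat \<Rightarrow> complex) \<Rightarrow> complex set" where
  "eigenvalues_on I A = {\<mu>. \<exists>v. is_eigvec I A \<mu> v}"

definition vnorm :: "nat set \<Rightarrow> (nat \<Rightarrow> complex) \<Rightarrow> real" where
  "vnorm I v = sqrt (\<Sum>j\<in>I. (cmod (v j))\<^sup>2)"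

definition vinner :: "nat set \<Rightarrow> (nat \<Rightarrow> complex) \<Rightarrow> (nat \<Rightarrow> complex) \<Rightarrow> complex" where
  "vinner I v w = (\<Sum>j\<in>I. v j * cnj (w j))"

definition mat_mult :: "nat set \<Rightarrow> (nat \<Rightarrow> nat \<Rightarrow> complex) \<Rightarrow> (nat \<Rightarrow> nat \<Rightarrow> complex) \<Rightarrow> nat \<Rightarrow> nat \<Rightarrow> complex" where
  "mat_mult I A B = (\<lambda>i j. \<Sum>m\<in>I. A i m * B m j)"

definition admissible :: "nat \<Rightarrow> (nat \<Rightarrow> nat) \<Rightarrow> nat \<Rightarrow> (nat \<Rightarrow> nat \<Rightarrow> real) \<Rightarrow> bool" where
  "admissible S L N Wd \<longleftrightarrow>
     (\<forall>i\<in>{1..N}. \<forall>j\<in>{1..N}. Wd i j = Wd j i) \<and>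
     (\<forall>i\<in>{1..N}. \<forall>j\<in>{1..N}. i \<noteq> j \<longrightarrow> Wd i j \<ge> 0) \<and>
     (\<forall>i\<in>{1..N}. (\<Sum>j\<in>{1..N}. Wd i j) = 0) \<and>
     card (eigenvalues_on {1..N} (\<lambda>i j. complex_of_real (Wd i j))) = N \<and>
     (\<forall>s\<in>{1..S}. card (eigenvalues_on (blk L s) (\<lambda>i j. complex_of_real (Wd i j))) = L s)"

definition phase :: "nat \<Rightarrow> (nat \<Rightarrow> real) \<Rightarrow> nat \<Rightarrow> complex" where
  "phase k \<beta> s = exp (- 2 * complex_of_real pi * \<i> * of_nat k * complex_of_real (\<beta> s))"

definition Dmat :: "nat \<Rightarrow> (nat \<Rightarrow> real) \<Rightarrow> nat \<Rightarrow> (nat \<Rightarrow> nat) \<Rightarrow> nat \<Rightarrow> nat \<Rightarrow> complex" where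
  "Dmat k \<beta> S L i j = (if i = j then (\<Sum>s\<in>{1..S}. if j \<in> blk L s then phase k \<beta> s else 0) else 0)"

definition Weps :: "(nat \<Rightarrow> nat \<Rightarrow> real) \<Rightarrow> real \<Rightarrow> nat \<Rightarrow> nat \<Rightarrow> complex" where
  "Weps Wd \<epsilon> i j = (if i = j then 1 else 0) + complex_of_real (\<epsilon> * Wd i j)"

definition What :: "nat \<Rightarrow> (nat \<Rightarrow> nat) \<Rightarrow> (nat \<Rightarrow> nat \<Rightarrow> real) \<Rightarrow> nat \<Rightarrow> nat \<Rightarrow> complex" where
  "What S L Wd i j = (if \<exists>s\<in>{1..S}. i \<in> blk L s \<and> j \<in> blk L s then complex_of_real (Wd i j) else 0)"

definition Gamma_set :: "nat \<Rightarrow> (nat \<Rightarrow> real) set" where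
  "Gamma_set S = {\<beta>. \<forall>k::int. k \<noteq> 0 \<longrightarrow> (\<forall>s1\<in>{1..S}. \<forall>s2\<in>{1..S}. s1 \<noteq> s2 \<longrightarrow>
      exp (- 2 * complex_of_real pi * \<i> * of_int k * complex_of_real (\<beta> s1)) \<noteq>
      exp (- 2 * complex_of_real pi * \<i> * of_int k * complex_of_real (\<beta> s2)))}"

definition smooth_on :: "real set \<Rightarrow> (real \<Rightarrow> complex) \<Rightarrow> bool" where
  "smooth_on U g \<longleftrightarrow> (\<exists>F :: nat \<Rightarrow> real \<Rightarrow> complex. (\<forall>x\<in>U. F 0 x = g x) \<and>
      (\<forall>n. \<forall>x\<in>U. (F n has_vector_derivative F (Suc n) x) (at x)))"

end

theory Submission
  imports Defs "HOL-Complex_Analysis.Complex_Analysis" "Jordan_Normal_Form.Char_Poly"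
begin

lemma prod_row_repl:
  assumes p: "p permutes {0..<n}" and i: "i < n"
  shows "(\<Prod>j=0..<n. Matrix.mat n n (\<lambda>(r,c). if r = i then R c else B $$ (r,c)) $$ (j, p j))
       = R (p i) * (\<Prod>j\<in>{0..<n}-{i}. B $$ (j, p j))"
proof -
  have pj: "\<And>j. j < n \<Longrightarrow> p j < n" using p permutes_in_image by fastforce
  have "(\<Prod>j=0..<n. Matrix.mat n n (\<lambda>(r,c). if r = i then R c else B $$ (r,c)) $$ (j, p j))
     = Matrix.mat n n (\<lambda>(r,c). if r = i then R c else B $$ (r,c)) $$ (i, p i) *
       (\<Prod>j\<in>{0..<n}-{i}. Matrix.mat n n (\<lambda>(r,c). if r = i then R c else B $$ (r,c)) $$ (j, p j))"
    using i by (subst prod.remove[of _ i]) auto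
  also have "\<dots> = R (p i) * (\<Prod>j\<in>{0..<n}-{i}. B $$ (j, p j))"
    using i pj by (intro arg_cong2[where f="(*)"] prod.cong) auto
  finally show ?thesis .
qed

lemma det_row_repl:
  "Determinant.det (Matrix.mat n n (\<lambda>(r,c). if r = i then R c else B $$ (r,c))) =
   (\<Sum>p\<in>{p. p permutes {0..<n}}. signof p * (\<Prod>j=0..<n. Matrix.mat n n (\<lambda>(r,c). if r = i then R c else B $$ (r,c)) $$ (j, p j)))"
  by (rule det_def') auto

lemma prod_if_row:
  assumes p: "p permutes {0..<n}" and i: "i < n"
  shows "(\<Prod>j=0..<n. if j = i then R (p j) else B $$ (j, p j)) = R (p i) * (\<Prod>j\<in>{0..<n}-{i}. B $$ (j, p j))"
  using i by (subst prod.remove[of _ i]) (auto intro!: prod.cong)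

lemma det_row_repl2:
  assumes i: "i < n"
  shows "Determinant.det (Matrix.mat n n (\<lambda>(r,c). if r = i then R c else B $$ (r,c))) =
   (\<Sum>p\<in>{p. p permutes {0..<n}}. signof p * (R (p i) * (\<Prod>j\<in>{0..<n}-{i}. B $$ (j, p j))))"
  unfolding det_row_repl by (rule sum.cong) (auto simp: prod_if_row[OF _ i])

lemma det_row_lin:
  fixes B :: "complex mat"
  assumes i: "i < n"
  shows "Determinant.det (Matrix.mat n n (\<lambda>(r,c). if r = i then a * u c + b * w c else B $$ (r,c))) =
     a * Determinant.det (Matrix.mat n n (\<lambda>(r,c). if r = i then u c else B $$ (r,c)))
   + b * Determinant.det (Matrix.mat n n (\<lambda>(r,c). if r = i then w c else B $$ (r,c)))"
  unfolding det_row_repl2[OF i]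
  by (simp add: sum_distrib_left sum.distrib[symmetric] algebra_simps)

lemma det_has_derivative:
  fixes M :: "'x::real_normed_vector \<Rightarrow> complex mat"
  assumes carr: "\<And>x. M x \<in> carrier_mat n n"
  and der: "\<And>i j. i < n \<Longrightarrow> j < n \<Longrightarrow> ((\<lambda>x. M x $$ (i,j)) has_derivative M' i j) (at x0)"
  shows "((\<lambda>x. Determinant.det (M x)) has_derivative
     (\<lambda>h. \<Sum>i<n. Determinant.det (Matrix.mat n n (\<lambda>(r,c). if r = i then M' i c h else M x0 $$ (r,c))))) (at x0)"
proof -
  have eq: "(\<lambda>x. Determinant.det (M x)) = (\<lambda>x. \<Sum>p\<in>{p. p permutes {0..<n}}. signof p * (\<Prod>i=0..<n. M x $$ (i, p i)))"
    using det_def'[OF carr] by auto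
  have pj: "\<And>p j. p permutes {0..<n} \<Longrightarrow> j < n \<Longrightarrow> p j < n" using permutes_in_image by fastforce
  have d: "((\<lambda>x. \<Sum>p\<in>{p. p permutes {0..<n}}. signof p * (\<Prod>i=0..<n. M x $$ (i, p i))) has_derivative
     (\<lambda>h. \<Sum>p\<in>{p. p permutes {0..<n}}. signof p * (\<Sum>i\<in>{0..<n}. M' i (p i) h * (\<Prod>j\<in>{0..<n}-{i}. M x0 $$ (j, p j))))) (at x0)"
    by (intro has_derivative_sum has_derivative_mult_right has_derivative_prod der) (auto intro: pj)
  have "(\<lambda>h. \<Sum>p\<in>{p. p permutes {0..<n}}. signof p * (\<Sum>i\<in>{0..<n}. M' i (p i) h * (\<Prod>j\<in>{0..<n}-{i}. M x0 $$ (j, p j))))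
     = (\<lambda>h. \<Sum>i<n. Determinant.det (Matrix.mat n n (\<lambda>(r,c). if r = i then M' i c h else M x0 $$ (r,c))))"
  proof
    fix h
    show "(\<Sum>p\<in>{p. p permutes {0..<n}}. signof p * (\<Sum>i\<in>{0..<n}. M' i (p i) h * (\<Prod>j\<in>{0..<n}-{i}. M x0 $$ (j, p j))))
     = (\<Sum>i<n. Determinant.det (Matrix.mat n n (\<lambda>(r,c). if r = i then M' i c h else M x0 $$ (r,c))))"
    proof -
      have "(\<Sum>i<n. Determinant.det (Matrix.mat n n (\<lambda>(r,c). if r = i then M' i c h else M x0 $$ (r,c))))
          = (\<Sum>i<n. (\<Sum>p\<in>{p. p permutes {0..<n}}. signof p * (M' i (p i) h * (\<Prod>j\<in>{0..<n}-{i}. M x0 $$ (j, p j)))))"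
        by (rule sum.cong[OF refl]) (rule det_row_repl2, simp)
      also have "\<dots> = (\<Sum>p\<in>{p. p permutes {0..<n}}. \<Sum>i<n. signof p * (M' i (p i) h * (\<Prod>j\<in>{0..<n}-{i}. M x0 $$ (j, p j))))"
        by (rule sum.swap)
      finally show ?thesis by (simp add: sum_distrib_left lessThan_atLeast0)
    qed
  qed
  with d eq show ?thesis by simp
qed

lemma det_holomorphic:
  assumes carr: "\<And>z. M z \<in> carrier_mat n n"
  and h: "\<And>i j. i < n \<Longrightarrow> j < n \<Longrightarrow> (\<lambda>z. M z $$ (i,j)) holomorphic_on T"
  shows "(\<lambda>z. Determinant.det (M z)) holomorphic_on T"
proof -
  have pj: "\<And>p j. p permutes {0..<n} \<Longrightarrow> j < n \<Longrightarrow> p j < n" using permutes_in_image by fastforce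
  have eq: "(\<lambda>x. Determinant.det (M x)) = (\<lambda>x. \<Sum>p\<in>{p. p permutes {0..<n}}. signof p * (\<Prod>i=0..<n. M x $$ (i, p i)))"
    using det_def'[OF carr] by auto
  show ?thesis unfolding eq
    by (intro holomorphic_intros h) (auto intro: pj)
qed

lemma det_continuous:
  fixes M :: "'x::topological_space \<Rightarrow> complex mat"
  assumes carr: "\<And>z. M z \<in> carrier_mat n n"
  and h: "\<And>i j. i < n \<Longrightarrow> j < n \<Longrightarrow> continuous_on T (\<lambda>z. M z $$ (i,j))"
  shows "continuous_on T (\<lambda>z. Determinant.det (M z))"
proof -
  have pj: "\<And>p j. p permutes {0..<n} \<Longrightarrow> j < n \<Longrightarrow> p j < n" using permutes_in_image by fastforce
  have eq: "(\<lambda>x. Determinant.det (M x)) = (\<lambda>x. \<Sum>p\<in>{p. p permutes {0..<n}}. signof p * (\<Prod>i=0..<n. M x $$ (i, p i)))"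
    using det_def'[OF carr] by auto
  show ?thesis unfolding eq
    by (intro continuous_intros h) (auto intro: pj)
qed

lemma smooth_local:
  assumes loc: "\<And>x. x \<in> U \<Longrightarrow> \<exists>\<delta>>0. \<exists>T h. open T \<and> of_real ` ball x \<delta> \<subseteq> T \<and> h holomorphic_on T \<and>
                   (\<forall>y\<in>ball x \<delta>. g y = h (of_real y))"
  shows "smooth_on U g"
proof -
  define Dn where "Dn n = ((\<lambda>f x. vector_derivative f (at x)) ^^ n) g" for n
  have hvd: "((\<lambda>t. (deriv^^n) h (of_real t)) has_vector_derivative (deriv^^(Suc n)) h (of_real y)) (at y)"
    if "open T" "h holomorphic_on T" "of_real y \<in> T" for n h T y
  proof -
    have "(deriv^^n) h holomorphic_on T" using that holomorphic_higher_deriv by blast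
    then have "((deriv^^n) h has_field_derivative deriv ((deriv^^n) h) (of_real y)) (at (of_real y))"
      using that holomorphic_derivI by blast
    then show ?thesis using has_vector_derivative_real_field by fastforce
  qed
  have claim: "\<forall>y\<in>ball x \<delta>. Dn n y = (deriv^^n) h (of_real y)"
    if "open T" "of_real ` ball x \<delta> \<subseteq> T" "h holomorphic_on T" "\<forall>y\<in>ball x \<delta>. g y = h (of_real y)" for x \<delta> T h n
  proof (induction n)
    case 0 then show ?case using that by (simp add: Dn_def)
  next
    case (Suc n)
    show ?case
    proof
      fix y assume y: "y \<in> ball x \<delta>"
      have "((\<lambda>t. (deriv^^n) h (of_real t)) has_vector_derivative (deriv^^(Suc n)) h (of_real y)) (at y)"
        using hvd that y by blast
      then have "(Dn n has_vector_derivative (deriv^^(Suc n)) h (of_real y)) (at y)"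
        by (rule has_vector_derivative_transform_within_open[where S="ball x \<delta>"]) (use y Suc in auto)
      then show "Dn (Suc n) y = (deriv^^(Suc n)) h (of_real y)"
        by (simp add: Dn_def vector_derivative_at)
    qed
  qed
  show ?thesis unfolding smooth_on_def
  proof (intro exI[of _ Dn] conjI ballI allI)
    fix x assume "x \<in> U" then show "Dn 0 x = g x" by (simp add: Dn_def)
  next
    fix n x assume x: "x \<in> U"
    from loc[OF x] obtain \<delta> T h where d: "\<delta> > 0" "open T" "of_real ` ball x \<delta> \<subseteq> T" "h holomorphic_on T"
      "\<forall>y\<in>ball x \<delta>. g y = h (of_real y)" by blast
    have c: "\<forall>y\<in>ball x \<delta>. Dn m y = (deriv^^m) h (of_real y)" for m using claim[OF d(2-5)] by blast
    have "((\<lambda>t. (deriv^^n) h (of_real t)) has_vector_derivative (deriv^^(Suc n)) h (of_real x)) (at x)"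
    proof -
      have "of_real x \<in> T" using d(1,3) by auto
      then show ?thesis using hvd[OF d(2) d(4), of x n] by blast
    qed
    then have "(Dn n has_vector_derivative (deriv^^(Suc n)) h (of_real x)) (at x)"
      by (rule has_vector_derivative_transform_within_open[where S="ball x \<delta>"]) (use d c in auto)
    then show "(Dn n has_vector_derivative Dn (Suc n) x) (at x)" using c[of "Suc n"] d by auto
  qed
qed

definition Mx :: "complex mat \<Rightarrow> complex mat \<Rightarrow> nat \<Rightarrow> complex \<times> complex \<Rightarrow> complex mat" where
  "Mx C0 C1 n x = Matrix.mat n n (\<lambda>(i,j). (if i = j then snd x else 0) - (C0 $$ (i,j) + fst x * C1 $$ (i,j)))"

definition ca :: "complex mat \<Rightarrow> complex mat \<Rightarrow> nat \<Rightarrow> complex \<times> complex \<Rightarrow> complex" where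
  "ca C0 C1 n x = (\<Sum>i<n. Determinant.det (Matrix.mat n n (\<lambda>(r,c). if r = i then - C1 $$ (i,c) else Mx C0 C1 n x $$ (r,c))))"

definition cb :: "complex mat \<Rightarrow> complex mat \<Rightarrow> nat \<Rightarrow> complex \<times> complex \<Rightarrow> complex" where
  "cb C0 C1 n x = (\<Sum>i<n. Determinant.det (Matrix.mat n n (\<lambda>(r,c). if r = i then (if i = c then 1 else 0) else Mx C0 C1 n x $$ (r,c))))"

lemma Mx_carr[simp]: "Mx C0 C1 n x \<in> carrier_mat n n"
  by (simp add: Mx_def)

lemma Mx_index[simp]: "i < n \<Longrightarrow> j < n \<Longrightarrow> Mx C0 C1 n x $$ (i,j) = (if i = j then snd x else 0) - (C0 $$ (i,j) + fst x * C1 $$ (i,j))"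
  by (simp add: Mx_def)

lemma Mx_dim[simp]: "dim_row (Mx C0 C1 n x) = n" "dim_col (Mx C0 C1 n x) = n"
  by (simp_all add: Mx_def)

lemma cp_Mx:
  assumes C0: "C0 \<in> carrier_mat n n" and C1: "C1 \<in> carrier_mat n n"
  shows "poly (char_poly (C0 + z \<cdot>\<^sub>m C1)) \<mu> = Determinant.det (Mx C0 C1 n (z,\<mu>))"
proof -
  have A: "C0 + z \<cdot>\<^sub>m C1 \<in> carrier_mat n n" using C0 C1 by auto
  have "- char_matrix (C0 + z \<cdot>\<^sub>m C1) \<mu> = Mx C0 C1 n (z,\<mu>)"
    by (rule eq_matI) (use C0 C1 in \<open>auto simp: char_matrix_def\<close>)
  then show ?thesis using char_poly_matrix[OF A] by simp
qed

lemma Mx_has_derivative: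
  fixes C0 C1 :: "complex mat"
  shows "((\<lambda>x. Determinant.det (Mx C0 C1 n x)) has_derivative (\<lambda>h. fst h * ca C0 C1 n x + snd h * cb C0 C1 n x)) (at x)"
proof -
  let ?M' = "\<lambda>i j h. (if i = j then snd h else 0) - fst h * C1 $$ (i,j)"
  have d: "((\<lambda>x. Mx C0 C1 n x $$ (i,j)) has_derivative ?M' i j) (at x)" if "i < n" "j < n" for i j
  proof -
    have e: "(\<lambda>x. Mx C0 C1 n x $$ (i,j)) = (\<lambda>x. (if i = j then snd x else 0) - (C0 $$ (i,j) + fst x * C1 $$ (i,j)))"
      using that by auto
    show ?thesis unfolding e
      by (cases "i = j") (auto intro!: derivative_eq_intros)
  qed
  have D: "((\<lambda>x. Determinant.det (Mx C0 C1 n x)) has_derivative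
     (\<lambda>h. \<Sum>i<n. Determinant.det (Matrix.mat n n (\<lambda>(r,c). if r = i then ?M' i c h else Mx C0 C1 n x $$ (r,c))))) (at x)"
    by (rule det_has_derivative[OF Mx_carr d])
  have "(\<lambda>h. \<Sum>i<n. Determinant.det (Matrix.mat n n (\<lambda>(r,c). if r = i then ?M' i c h else Mx C0 C1 n x $$ (r,c))))
      = (\<lambda>h. fst h * ca C0 C1 n x + snd h * cb C0 C1 n x)"
  proof
    fix h :: "complex \<times> complex"
    have "(\<Sum>i<n. Determinant.det (Matrix.mat n n (\<lambda>(r,c). if r = i then ?M' i c h else Mx C0 C1 n x $$ (r,c))))
       = (\<Sum>i<n. fst h * Determinant.det (Matrix.mat n n (\<lambda>(r,c). if r = i then - C1 $$ (i,c) else Mx C0 C1 n x $$ (r,c)))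
              + snd h * Determinant.det (Matrix.mat n n (\<lambda>(r,c). if r = i then (if i = c then 1 else 0) else Mx C0 C1 n x $$ (r,c))))"
    proof (rule sum.cong[OF refl])
      fix i assume i: "i \<in> {..<n}"
      have "Matrix.mat n n (\<lambda>(r,c). if r = i then ?M' i c h else Mx C0 C1 n x $$ (r,c))
          = Matrix.mat n n (\<lambda>(r,c). if r = i then fst h * (- C1 $$ (i,c)) + snd h * (if i = c then 1 else 0) else Mx C0 C1 n x $$ (r,c))"
        by (rule eq_matI) auto
      then show "Determinant.det (Matrix.mat n n (\<lambda>(r,c). if r = i then ?M' i c h else Mx C0 C1 n x $$ (r,c))) =
         fst h * Determinant.det (Matrix.mat n n (\<lambda>(r,c). if r = i then - C1 $$ (i,c) else Mx C0 C1 n x $$ (r,c)))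
              + snd h * Determinant.det (Matrix.mat n n (\<lambda>(r,c). if r = i then (if i = c then 1 else 0) else Mx C0 C1 n x $$ (r,c)))"
        using det_row_lin[of i n "fst h" "\<lambda>c. - C1 $$ (i,c)" "snd h" "\<lambda>c. if i = c then 1 else 0" "Mx C0 C1 n x"] i by simp
    qed
    also have "\<dots> = fst h * ca C0 C1 n x + snd h * cb C0 C1 n x"
      by (simp add: ca_def cb_def sum.distrib sum_distrib_left)
    finally show "(\<Sum>i<n. Determinant.det (Matrix.mat n n (\<lambda>(r,c). if r = i then ?M' i c h else Mx C0 C1 n x $$ (r,c))))
      = fst h * ca C0 C1 n x + snd h * cb C0 C1 n x" .
  qed
  with D show ?thesis by simp
qed

lemma Mx_entry_cont: "i < n \<Longrightarrow> j < n \<Longrightarrow> continuous_on S (\<lambda>x. Mx C0 C1 n x $$ (i,j))"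
  by (cases "i = j") (simp_all add: Mx_def, (intro continuous_intros)+)

lemma cont_if_const: "continuous_on S f \<Longrightarrow> continuous_on S (\<lambda>x. if P then c else f x)"
  by (cases P) auto

lemma ca_cont: "continuous_on UNIV (ca C0 C1 n)"
  unfolding ca_def
  by (intro continuous_intros det_continuous) (auto intro!: cont_if_const Mx_entry_cont)

lemma cb_cont: "continuous_on UNIV (cb C0 C1 n)"
  unfolding cb_def
  by (intro continuous_intros det_continuous) (auto intro!: cont_if_const Mx_entry_cont)

lemma shift_eq_iff: "((if r < i then r else Suc r) = (if c < i then c else Suc (c::nat))) \<longleftrightarrow> r = c"
  by auto

lemma cofactor_sum_pderiv:
  assumes C0: "C0 \<in> carrier_mat n n" and C1: "C1 \<in> carrier_mat n n"
  shows "poly (pderiv (char_poly (C0 + z \<cdot>\<^sub>m C1))) \<mu> = (\<Sum>i<n. cofactor (Mx C0 C1 n (z,\<mu>)) i i)"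
proof -
  have A: "C0 + z \<cdot>\<^sub>m C1 \<in> carrier_mat n n" using C0 C1 by auto
  have "poly (char_poly (mat_delete (C0 + z \<cdot>\<^sub>m C1) i i)) \<mu> = cofactor (Mx C0 C1 n (z,\<mu>)) i i" if i: "i < n" for i
  proof -
    have Ad: "mat_delete (C0 + z \<cdot>\<^sub>m C1) i i \<in> carrier_mat (n-1) (n-1)" using mat_delete_carrier[OF A] .
    have "- char_matrix (mat_delete (C0 + z \<cdot>\<^sub>m C1) i i) \<mu> = mat_delete (Mx C0 C1 n (z,\<mu>)) i i"
      by (rule eq_matI) (use C0 C1 i in \<open>auto simp: char_matrix_def mat_delete_def shift_eq_iff\<close>)
    moreover have "cofactor (Mx C0 C1 n (z,\<mu>)) i i = Determinant.det (mat_delete (Mx C0 C1 n (z,\<mu>)) i i)"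
      by (simp add: cofactor_def)
    ultimately show ?thesis using char_poly_matrix[OF Ad] by simp
  qed
  then show ?thesis using pderiv_char_poly[OF A] by (simp add: poly_sum)
qed

lemma bl_pair: "bounded_linear (\<lambda>h::complex\<times>complex. (fst h, fst h * c + snd h * d))"
  by (intro bounded_linear_Pair bounded_linear_add bounded_linear_fst
      bounded_linear_compose[OF bounded_linear_mult_left bounded_linear_fst]
      bounded_linear_compose[OF bounded_linear_mult_left bounded_linear_snd])

lemma norm_pair_bound:
  fixes h :: "complex \<times> complex"
  shows "norm ((0::complex), fst h * a + snd h * b) \<le> (cmod a + cmod b) * norm h"
proof -
  have "norm ((0::complex), fst h * a + snd h * b) = cmod (fst h * a + snd h * b)"
    by (simp add: norm_Pair)
  also have "\<dots> \<le> cmod (fst h) * cmod a + cmod (snd h) * cmod b"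
    by (metis norm_mult norm_triangle_ineq)
  also have "\<dots> \<le> norm h * cmod a + norm h * cmod b"
    by (intro add_mono mult_right_mono) (auto, metis norm_fst_le prod.collapse, metis norm_snd_le prod.collapse)
  finally show ?thesis by (simp add: algebra_simps)
qed

lemma holo_root:
  fixes C0 C1 :: "complex mat" and lam :: "real \<Rightarrow> complex"
  assumes r: "r > 0" and cont: "isCont lam \<epsilon>0"
  and root: "\<forall>\<epsilon>\<in>ball \<epsilon>0 r. Determinant.det (Mx C0 C1 n (of_real \<epsilon>, lam \<epsilon>)) = 0"
  and b0: "cb C0 C1 n (of_real \<epsilon>0, lam \<epsilon>0) \<noteq> 0"
  shows "\<exists>\<Omega> lt \<delta>. open \<Omega> \<and> lt holomorphic_on \<Omega> \<and> \<delta> > 0 \<and> (\<forall>z\<in>\<Omega>. Determinant.det (Mx C0 C1 n (z, lt z)) = 0) \<and>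
           (\<forall>\<epsilon>\<in>ball \<epsilon>0 \<delta>. of_real \<epsilon> \<in> \<Omega> \<and> lt (of_real \<epsilon>) = lam \<epsilon>)"
proof -
  let ?a = "ca C0 C1 n" and ?b = "cb C0 C1 n"
  define \<Phi> where "\<Phi> x = (fst x, Determinant.det (Mx C0 C1 n x))" for x
  define \<Phi>' where "\<Phi>' x = Blinfun (\<lambda>h::complex\<times>complex. (fst h, fst h * ?a x + snd h * ?b x))" for x
  have \<Phi>'a: "blinfun_apply (\<Phi>' x) h = (fst h, fst h * ?a x + snd h * ?b x)" for x h
    by (simp add: \<Phi>'_def bounded_linear_Blinfun_apply[OF bl_pair])
  have der: "(\<Phi> has_derivative blinfun_apply (\<Phi>' x)) (at x)" for x
    unfolding \<Phi>_def
    by (rule has_derivative_eq_rhs[OF has_derivative_Pair[OF has_derivative_fst[OF has_derivative_ident] Mx_has_derivative]])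
      (simp add: fun_eq_iff \<Phi>'a)
  have nb: "norm (\<Phi>' x - \<Phi>' y) \<le> cmod (?a x - ?a y) + cmod (?b x - ?b y)" for x y
  proof (rule norm_blinfun_bound)
    fix h
    have "blinfun_apply (\<Phi>' x - \<Phi>' y) h = (0, fst h * (?a x - ?a y) + snd h * (?b x - ?b y))"
      by (simp add: blinfun.diff_left \<Phi>'a algebra_simps)
    then show "norm (blinfun_apply (\<Phi>' x - \<Phi>' y) h) \<le> (cmod (?a x - ?a y) + cmod (?b x - ?b y)) * norm h"
      using norm_pair_bound by simp
  qed simp
  have contD: "continuous_on UNIV \<Phi>'"
    unfolding continuous_on_iff
  proof (intro ballI allI impI)
    fix x :: "complex \<times> complex" and e :: real assume e: "e > 0"
    obtain d1 where d1: "d1 > 0" "\<forall>x'. dist x' x < d1 \<longrightarrow> dist (?a x') (?a x) < e/2"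
      using ca_cont[of C0 C1 n] e unfolding continuous_on_iff by (metis UNIV_I half_gt_zero)
    obtain d2 where d2: "d2 > 0" "\<forall>x'. dist x' x < d2 \<longrightarrow> dist (?b x') (?b x) < e/2"
      using cb_cont[of C0 C1 n] e unfolding continuous_on_iff by (metis UNIV_I half_gt_zero)
    show "\<exists>d>0. \<forall>x'\<in>UNIV. dist x' x < d \<longrightarrow> dist (\<Phi>' x') (\<Phi>' x) < e"
    proof (intro exI[of _ "min d1 d2"] conjI ballI impI)
      fix x' assume "dist x' x < min d1 d2"
      then have dd: "dist x' x < d1" "dist x' x < d2" by auto
      have "dist (?a x') (?a x) < e/2" using d1(2) dd(1) by blast
      moreover have "dist (?b x') (?b x) < e/2" using d2(2) dd(2) by blast
      ultimately show "dist (\<Phi>' x') (\<Phi>' x) < e"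
        using nb[of x' x] by (simp add: dist_norm)
    qed (use d1 d2 in auto)
  qed
  define x0 where "x0 = (complex_of_real \<epsilon>0, lam \<epsilon>0)"
  define invf where "invf = Blinfun (\<lambda>h::complex\<times>complex. (fst h, fst h * (- ?a x0 / ?b x0) + snd h * (1 / ?b x0)))"
  have invfa: "blinfun_apply invf h = (fst h, fst h * (- ?a x0 / ?b x0) + snd h * (1 / ?b x0))" for h
    unfolding invf_def by (simp only: bounded_linear_Blinfun_apply[OF bl_pair])
  have inv: "invf o\<^sub>L \<Phi>' x0 = id_blinfun"
  proof (rule blinfun_eqI)
    fix h :: "complex \<times> complex"
    show "blinfun_apply (invf o\<^sub>L \<Phi>' x0) h = blinfun_apply id_blinfun h"
      using b0 unfolding x0_def[symmetric]
      by (cases h) (simp add: invfa \<Phi>'a field_simps)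
  qed
  obtain U' V g g' where U': "open U'" "x0 \<in> U'" and V: "open V" "\<Phi> x0 \<in> V"
    and hom: "homeomorphism U' V \<Phi> g"
    and gder: "\<And>y. y \<in> V \<Longrightarrow> (g has_derivative g' y) (at y)"
    and g'eq: "\<And>y. y \<in> V \<Longrightarrow> g' y = inv_into UNIV (blinfun_apply (\<Phi>' (g y)))"
    and bij: "\<And>y. y \<in> V \<Longrightarrow> bij (blinfun_apply (\<Phi>' (g y)))"
    by (rule inverse_function_theorem[OF open_UNIV der contD UNIV_I inv]) blast
  have h1: "\<And>x. x \<in> U' \<Longrightarrow> g (\<Phi> x) = x" and h2: "\<And>y. y \<in> V \<Longrightarrow> \<Phi> (g y) = y"
    and h3: "\<Phi> ` U' = V"
    using hom unfolding homeomorphism_def by auto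
  define \<Omega> where "\<Omega> = (\<lambda>z. (z, 0::complex)) -` V"
  have "open \<Omega>" unfolding \<Omega>_def
    by (rule open_vimage[OF V(1)]) (intro continuous_intros)
  define lt where "lt z = snd (g (z, 0))" for z
  have gz: "g (z, 0) = (z, lt z)" if "z \<in> \<Omega>" for z
  proof -
    have "fst (\<Phi> (g (z,0))) = z" using h2[of "(z,0)"] that by (simp add: \<Omega>_def)
    then show ?thesis by (simp add: lt_def \<Phi>_def prod_eq_iff)
  qed
  have plt: "Determinant.det (Mx C0 C1 n (z, lt z)) = 0" if "z \<in> \<Omega>" for z
  proof -
    have "snd (\<Phi> (g (z,0))) = 0" using h2[of "(z,0)"] that by (simp add: \<Omega>_def)
    then show ?thesis using gz[OF that] by (simp add: \<Phi>_def)
  qed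
  have holo: "lt holomorphic_on \<Omega>"
    unfolding holomorphic_on_def field_differentiable_def
  proof
    fix z assume z: "z \<in> \<Omega>"
    let ?w = "g (z, 0)"
    have zV: "(z,0) \<in> V" using z by (simp add: \<Omega>_def)
    have b: "?b ?w \<noteq> 0"
    proof
      assume "?b ?w = 0"
      then have "blinfun_apply (\<Phi>' ?w) (0,1) = blinfun_apply (\<Phi>' ?w) (0,0)" by (simp add: \<Phi>'a)
      moreover have "inj (blinfun_apply (\<Phi>' ?w))" using bij[OF zV] by (simp add: bij_def)
      ultimately have "((0::complex), (1::complex)) = (0, 0)" by (meson injD)
      then show False by simp
    qed
    have invc: "g' (z,0) (h, 0) = (h, h * (- ?a ?w / ?b ?w))" for h
    proof -
      have "blinfun_apply (\<Phi>' ?w) (h, h * (- ?a ?w / ?b ?w)) = (h, 0)"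
        using b by (simp add: \<Phi>'a field_simps)
      then show ?thesis unfolding g'eq[OF zV] using bij[OF zV] by (simp add: bij_def inv_f_eq)
    qed
    have d1: "((\<lambda>z. (z, 0::complex)) has_derivative (\<lambda>h. (h, 0))) (at z)"
      by (intro derivative_eq_intros) auto
    have d2: "((\<lambda>z. g (z, 0)) has_derivative (\<lambda>h. g' (z,0) (h, 0))) (at z)"
      using has_derivative_compose[OF d1 gder[OF zV]] by simp
    have d3: "((\<lambda>z. snd (g (z, 0))) has_derivative (\<lambda>h. snd (g' (z,0) (h, 0)))) (at z)"
      by (rule has_derivative_snd[OF d2])
    have "(lt has_field_derivative (- ?a ?w / ?b ?w)) (at z)"
      unfolding has_field_derivative_def lt_def
      by (rule has_derivative_eq_rhs[OF d3]) (simp add: invc fun_eq_iff mult.commute)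
    then show "\<exists>f'. (lt has_field_derivative f') (at z within \<Omega>)"
      using has_field_derivative_at_within by blast
  qed
  have "isCont (\<lambda>\<epsilon>. (complex_of_real \<epsilon>, lam \<epsilon>)) \<epsilon>0"
    using cont by (intro continuous_intros) auto
  then have "\<forall>\<^sub>F \<epsilon> in at \<epsilon>0. (complex_of_real \<epsilon>, lam \<epsilon>) \<in> U'"
    using U' unfolding isCont_def x0_def by (intro topological_tendstoD) auto
  then obtain d0 where d0: "d0 > 0" "\<forall>\<epsilon>. \<epsilon> \<noteq> \<epsilon>0 \<and> dist \<epsilon> \<epsilon>0 < d0 \<longrightarrow> (complex_of_real \<epsilon>, lam \<epsilon>) \<in> U'"
    unfolding eventually_at by blast
  have d: "d0 > 0" "\<forall>\<epsilon>. dist \<epsilon> \<epsilon>0 < d0 \<longrightarrow> (complex_of_real \<epsilon>, lam \<epsilon>) \<in> U'"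
    using d0 U'(2) unfolding x0_def by auto
  show ?thesis
  proof (intro exI conjI ballI)
    show "open \<Omega>" by fact
    show "lt holomorphic_on \<Omega>" by fact
    show "min d0 r > 0" using d r by simp
    show "Determinant.det (Mx C0 C1 n (z, lt z)) = 0" if "z \<in> \<Omega>" for z using plt that .
    fix \<epsilon> assume e: "\<epsilon> \<in> ball \<epsilon>0 (min d0 r)"
    then have inU: "(complex_of_real \<epsilon>, lam \<epsilon>) \<in> U'" using d by (auto simp: dist_commute)
    have "Determinant.det (Mx C0 C1 n (of_real \<epsilon>, lam \<epsilon>)) = 0" using root e by auto
    then have P: "\<Phi> (complex_of_real \<epsilon>, lam \<epsilon>) = (of_real \<epsilon>, 0)" by (simp add: \<Phi>_def)
    then have "(complex_of_real \<epsilon>, 0) \<in> V" using h3 inU by force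
    then show om: "complex_of_real \<epsilon> \<in> \<Omega>" by (simp add: \<Omega>_def)
    have "g (complex_of_real \<epsilon>, 0) = (complex_of_real \<epsilon>, lam \<epsilon>)" using h1[OF inU] P by simp
    then show "lt (complex_of_real \<epsilon>) = lam \<epsilon>" by (simp add: lt_def)
  qed
qed

lemma mv_index: "A \<in> carrier_mat n n \<Longrightarrow> w \<in> carrier_vec n \<Longrightarrow> i < n \<Longrightarrow> (A *\<^sub>v w) $ i = (\<Sum>k<n. A $$ (i,k) * w $ k)"
  by (simp add: scalar_prod_def lessThan_atLeast0 row_def)

lemma mm_index: "A \<in> carrier_mat n n \<Longrightarrow> B \<in> carrier_mat n n \<Longrightarrow> i < n \<Longrightarrow> j < n \<Longrightarrow>
   (A * B) $$ (i,j) = (\<Sum>k<n. A $$ (i,k) * B $$ (k,j))"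
  by (simp add: scalar_prod_def lessThan_atLeast0 row_def col_def)

lemma Mx_entry_holo:
  assumes "lt holomorphic_on \<Omega>" "a < n" "b < n"
  shows "(\<lambda>z. Mx C0 C1 n (z, lt z) $$ (a,b)) holomorphic_on \<Omega>"
  using assms by (cases "a = b") (auto intro!: holomorphic_intros)

lemma shift_lt: "r < n - 1 \<Longrightarrow> (if r < i then r else Suc r) < (n::nat)"
  by auto

lemma cofactor_holo:
  assumes "lt holomorphic_on \<Omega>"
  shows "(\<lambda>z. cofactor (Mx C0 C1 n (z, lt z)) i k) holomorphic_on \<Omega>"
proof -
  have "(\<lambda>z. Determinant.det (mat_delete (Mx C0 C1 n (z, lt z)) i k)) holomorphic_on \<Omega>"
  proof (rule det_holomorphic[where n="n-1"])
    show "mat_delete (Mx C0 C1 n (z, lt z)) i k \<in> carrier_mat (n - 1) (n - 1)" for z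
      by (rule mat_delete_carrier[OF Mx_carr])
    fix a b assume ab: "a < n - 1" "b < n - 1"
    have e: "(\<lambda>z. mat_delete (Mx C0 C1 n (z, lt z)) i k $$ (a, b)) =
       (\<lambda>z. Mx C0 C1 n (z, lt z) $$ (if a < i then a else Suc a, if b < k then b else Suc b))"
      using ab by (simp add: mat_delete_def)
    show "(\<lambda>z. mat_delete (Mx C0 C1 n (z, lt z)) i k $$ (a, b)) holomorphic_on \<Omega>"
      unfolding e by (rule Mx_entry_holo[OF assms shift_lt shift_lt]) (use ab in auto)
  qed
  then show ?thesis unfolding cofactor_def by (intro holomorphic_intros)
qed

lemma kernel_span:
  fixes M :: "complex mat" and u v :: "complex vec"
  assumes M: "M \<in> carrier_mat n n" and j: "j < n" and cj: "cofactor M j j \<noteq> 0"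
  and v: "v \<in> carrier_vec n" and vj: "v $ j = cofactor M j j" and Mv: "M *\<^sub>v v = 0\<^sub>v n"
  and u: "u \<in> carrier_vec n" and Mu: "M *\<^sub>v u = 0\<^sub>v n"
  shows "u = (u $ j / v $ j) \<cdot>\<^sub>v v"
proof -
  define c where "c = u $ j / v $ j"
  define u' where "u' = u - c \<cdot>\<^sub>v v"
  have u'c: "u' \<in> carrier_vec n" using u v by (simp add: u'_def)
  define M' where "M' = Matrix.mat n n (\<lambda>(r,s). if r = j then (if s = j then 1 else 0) else M $$ (r,s))"
  have M'c: "M' \<in> carrier_mat n n" by (simp add: M'_def)
  have Mvi: "(\<Sum>k<n. M $$ (i,k) * v $ k) = 0" if "i < n" for i
    using arg_cong[OF Mv, of "\<lambda>w::complex vec. w $ i"] mv_index[OF M v that] that by simp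
  have Mui: "(\<Sum>k<n. M $$ (i,k) * u $ k) = 0" if "i < n" for i
    using arg_cong[OF Mu, of "\<lambda>w::complex vec. w $ i"] mv_index[OF M u that] that by simp
  have M'u': "M' *\<^sub>v u' = 0\<^sub>v n"
  proof (rule eq_vecI)
    fix i assume "i < dim_vec (0\<^sub>v n :: complex vec)"
    then have i: "i < n" by simp
    have "(M' *\<^sub>v u') $ i = (\<Sum>k<n. M' $$ (i,k) * u' $ k)" by (rule mv_index[OF M'c u'c i])
    also have "\<dots> = 0"
    proof (cases "i = j")
      case True
      have "(\<Sum>k<n. M' $$ (i,k) * u' $ k) = (\<Sum>k<n. (if k = j then u' $ k else 0))"
        using True i by (intro sum.cong) (auto simp: M'_def)
      also have "\<dots> = u' $ j" using j by simp
      also have "\<dots> = 0" using u v j cj vj by (simp add: u'_def c_def)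
      finally show ?thesis .
    next
      case False
      have "(\<Sum>k<n. M' $$ (i,k) * u' $ k) = (\<Sum>k<n. M $$ (i,k) * u $ k) - c * (\<Sum>k<n. M $$ (i,k) * v $ k)"
        using False i u v by (simp add: M'_def u'_def sum_distrib_left sum_subtractf algebra_simps)
      then show ?thesis using Mvi[OF i] Mui[OF i] by simp
    qed
    finally show "(M' *\<^sub>v u') $ i = 0\<^sub>v n $ i" using i by simp
  qed (simp add: M'_def)
  have "Determinant.det M' = (\<Sum>s<n. M' $$ (j,s) * cofactor M' j s)" by (rule laplace_expansion_row[OF M'c j])
  also have "\<dots> = (\<Sum>s<n. if s = j then cofactor M' j j else 0)"
    using j by (intro sum.cong) (auto simp: M'_def)
  also have "\<dots> = cofactor M' j j" using j by simp
  also have "\<dots> = cofactor M j j"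
  proof -
    have "mat_delete M' j j = mat_delete M j j"
      by (rule eq_matI) (use M in \<open>auto simp: mat_delete_def M'_def\<close>)
    then show ?thesis by (simp add: cofactor_def)
  qed
  finally have "Determinant.det M' \<noteq> 0" using cj by simp
  then have "u' = 0\<^sub>v n" using det_0_iff_vec_prod_zero[OF M'c] M'u' u'c by blast
  show ?thesis unfolding c_def[symmetric]
  proof (rule eq_vecI)
    fix i assume "i < dim_vec (c \<cdot>\<^sub>v v)"
    then have i: "i < n" using v by simp
    have "u' $ i = 0" using \<open>u' = 0\<^sub>v n\<close> i by simp
    then show "u $ i = (c \<cdot>\<^sub>v v) $ i" using i u v by (simp add: u'_def)
  qed (use u v in simp)
qed

lemma core:
  fixes C0 C1 :: "complex mat" and lam :: "real \<Rightarrow> complex"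
  assumes C0: "C0 \<in> carrier_mat n n" and C1: "C1 \<in> carrier_mat n n"
  and r: "r > 0" and cont: "isCont lam \<epsilon>0"
  and root: "\<forall>\<epsilon>\<in>ball \<epsilon>0 r. poly (char_poly (C0 + of_real \<epsilon> \<cdot>\<^sub>m C1)) (lam \<epsilon>) = 0"
  and simple: "poly (pderiv (char_poly (C0 + of_real \<epsilon>0 \<cdot>\<^sub>m C1))) (lam \<epsilon>0) \<noteq> 0"
  shows "\<exists>\<delta>>0. \<exists>T v. open T \<and> of_real ` ball \<epsilon>0 \<delta> \<subseteq> T \<and> (\<forall>k<n. (\<lambda>z. v z $ k) holomorphic_on T) \<and> (\<forall>z. v z \<in> carrier_vec n) \<and>
    (\<forall>\<epsilon>\<in>ball \<epsilon>0 \<delta>. v (of_real \<epsilon>) \<noteq> 0\<^sub>v n \<and> Mx C0 C1 n (of_real \<epsilon>, lam \<epsilon>) *\<^sub>v v (of_real \<epsilon>) = 0\<^sub>v n \<and>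
        (\<forall>u\<in>carrier_vec n. Mx C0 C1 n (of_real \<epsilon>, lam \<epsilon>) *\<^sub>v u = 0\<^sub>v n \<longrightarrow> (\<exists>c. u = c \<cdot>\<^sub>v v (of_real \<epsilon>))))"
proof -
  define x0 where "x0 = (complex_of_real \<epsilon>0, lam \<epsilon>0)"
  have root': "\<forall>\<epsilon>\<in>ball \<epsilon>0 r. Determinant.det (Mx C0 C1 n (of_real \<epsilon>, lam \<epsilon>)) = 0"
    using root cp_Mx[OF C0 C1] by simp
  have d0: "((\<lambda>\<mu>. (complex_of_real \<epsilon>0, \<mu>)) has_derivative (\<lambda>k. (0, k))) (at (lam \<epsilon>0))"
    by (intro derivative_eq_intros) auto
  have D1: "((\<lambda>\<mu>. Determinant.det (Mx C0 C1 n (complex_of_real \<epsilon>0, \<mu>))) has_field_derivative cb C0 C1 n x0) (at (lam \<epsilon>0))"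
    unfolding has_field_derivative_def
    by (rule has_derivative_eq_rhs[OF has_derivative_compose[OF d0 Mx_has_derivative]])
      (simp add: fun_eq_iff x0_def mult.commute)
  have D2: "((\<lambda>\<mu>. Determinant.det (Mx C0 C1 n (complex_of_real \<epsilon>0, \<mu>))) has_field_derivative
      poly (pderiv (char_poly (C0 + of_real \<epsilon>0 \<cdot>\<^sub>m C1))) (lam \<epsilon>0)) (at (lam \<epsilon>0))"
    using poly_DERIV[of "char_poly (C0 + of_real \<epsilon>0 \<cdot>\<^sub>m C1)" "lam \<epsilon>0"] cp_Mx[OF C0 C1] by simp
  have b0: "cb C0 C1 n (of_real \<epsilon>0, lam \<epsilon>0) \<noteq> 0"
    using DERIV_unique[OF D1 D2] simple x0_def by simp
  obtain \<Omega> lt \<delta>1 where \<Omega>: "open \<Omega>" and holo: "lt holomorphic_on \<Omega>" and \<delta>1: "\<delta>1 > 0"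
    and plt: "\<forall>z\<in>\<Omega>. Determinant.det (Mx C0 C1 n (z, lt z)) = 0"
    and rl: "\<forall>\<epsilon>\<in>ball \<epsilon>0 \<delta>1. of_real \<epsilon> \<in> \<Omega> \<and> lt (of_real \<epsilon>) = lam \<epsilon>"
    using holo_root[OF r cont root' b0] by blast
  have "(\<Sum>i<n. cofactor (Mx C0 C1 n x0) i i) \<noteq> 0"
    using simple cofactor_sum_pderiv[OF C0 C1] by (simp add: x0_def)
  then obtain j where j: "j < n" and cj0: "cofactor (Mx C0 C1 n x0) j j \<noteq> 0"
    by (meson lessThan_iff sum.neutral)
  have e0: "complex_of_real \<epsilon>0 \<in> \<Omega>" "lt (complex_of_real \<epsilon>0) = lam \<epsilon>0" using rl \<delta>1 by auto
  define cof where "cof z = cofactor (Mx C0 C1 n (z, lt z)) j j" for z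
  define v where "v z = Matrix.vec n (\<lambda>k. cofactor (Mx C0 C1 n (z, lt z)) j k)" for z
  define T where "T = \<Omega> \<inter> cof -` (- {0})"
  have "open T" unfolding T_def
    by (rule continuous_open_preimage[OF holomorphic_on_imp_continuous_on \<Omega>])
      (use cofactor_holo[OF holo] in \<open>auto simp: cof_def[abs_def]\<close>)
  have "complex_of_real \<epsilon>0 \<in> T" using e0 cj0 by (simp add: T_def cof_def x0_def)
  then obtain e where e: "e > 0" "ball (complex_of_real \<epsilon>0) e \<subseteq> T"
    using \<open>open T\<close> open_contains_ball by blast
  define \<delta> where "\<delta> = min \<delta>1 e"
  have sub: "of_real ` ball \<epsilon>0 \<delta> \<subseteq> T"
  proof
    fix z :: complex assume "z \<in> of_real ` ball \<epsilon>0 \<delta>"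
    then obtain \<epsilon> where "\<epsilon> \<in> ball \<epsilon>0 \<delta>" "z = of_real \<epsilon>" by auto
    then have "dist z (complex_of_real \<epsilon>0) < e" by (simp add: \<delta>_def dist_commute dist_norm flip: of_real_diff)
    then show "z \<in> T" using e by (auto simp: dist_commute)
  qed
  have hol: "\<forall>k<n. (\<lambda>z. v z $ k) holomorphic_on T"
  proof (intro allI impI)
    fix k assume "k < n"
    have "(\<lambda>z. cofactor (Mx C0 C1 n (z, lt z)) j k) holomorphic_on T"
      using cofactor_holo[OF holo] holomorphic_on_subset T_def by blast
    then show "(\<lambda>z. v z $ k) holomorphic_on T" using \<open>k < n\<close> by (simp add: v_def)
  qed
  have vc: "\<forall>z. v z \<in> carrier_vec n" by (simp add: v_def)
  have main: "\<forall>\<epsilon>\<in>ball \<epsilon>0 \<delta>. v (of_real \<epsilon>) \<noteq> 0\<^sub>v n \<and> Mx C0 C1 n (of_real \<epsilon>, lam \<epsilon>) *\<^sub>v v (of_real \<epsilon>) = 0\<^sub>v n \<and>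
        (\<forall>u\<in>carrier_vec n. Mx C0 C1 n (of_real \<epsilon>, lam \<epsilon>) *\<^sub>v u = 0\<^sub>v n \<longrightarrow> (\<exists>c. u = c \<cdot>\<^sub>v v (of_real \<epsilon>)))"
  proof (intro ballI conjI impI)
    fix \<epsilon> assume eb: "\<epsilon> \<in> ball \<epsilon>0 \<delta>"
    let ?z = "complex_of_real \<epsilon>"
    have eb1: "\<epsilon> \<in> ball \<epsilon>0 \<delta>1" using eb by (simp add: \<delta>_def)
    have zT: "?z \<in> T" using sub eb by auto
    have lz: "lt ?z = lam \<epsilon>" and zO: "?z \<in> \<Omega>" using rl eb1 by auto
    let ?M = "Mx C0 C1 n (?z, lam \<epsilon>)"
    have detM: "Determinant.det ?M = 0" using plt zO lz by metis
    have cofz: "cofactor ?M j j \<noteq> 0" using zT lz by (simp add: T_def cof_def)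
    have vz: "v ?z = Matrix.vec n (\<lambda>k. cofactor ?M j k)" using lz by (simp add: v_def)
    have adj: "?M * adj_mat ?M = 0 \<cdot>\<^sub>m 1\<^sub>m n" using adj_mat(2)[OF Mx_carr] detM by simp
    show Mv: "?M *\<^sub>v v ?z = 0\<^sub>v n"
    proof (rule eq_vecI)
      fix i assume "i < dim_vec (0\<^sub>v n :: complex vec)"
      then have i: "i < n" by simp
      have "(?M *\<^sub>v v ?z) $ i = (\<Sum>k<n. ?M $$ (i,k) * v ?z $ k)"
        by (rule mv_index[OF Mx_carr _ i]) (simp add: v_def)
      also have "\<dots> = (\<Sum>k<n. ?M $$ (i,k) * adj_mat ?M $$ (k,j))"
        unfolding vz using j by (intro sum.cong) (auto simp: adj_mat_def)
      also have "\<dots> = (?M * adj_mat ?M) $$ (i,j)"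
        by (rule mm_index[symmetric, OF Mx_carr adj_mat(1)[OF Mx_carr] i j])
      also have "\<dots> = 0" using adj i j by simp
      finally show "(?M *\<^sub>v v ?z) $ i = 0\<^sub>v n $ i" using i by simp
    qed simp
    have vj: "v ?z $ j = cofactor ?M j j" using vz j by simp
    then show "v ?z \<noteq> 0\<^sub>v n" using cofz j by auto
    fix u :: "complex vec" assume u: "u \<in> carrier_vec n" and Mu: "?M *\<^sub>v u = 0\<^sub>v n"
    show "\<exists>c. u = c \<cdot>\<^sub>v v ?z"
      using kernel_span[OF Mx_carr j cofz _ vj Mv u Mu] by (auto simp: v_def)
  qed
  have "\<delta> > 0" using \<delta>1 e by (simp add: \<delta>_def)
  then show ?thesis using \<open>open T\<close> sub hol vc main by blast
qed

lemma simple_root: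
  fixes A :: "complex mat"
  assumes A: "A \<in> carrier_mat n n" and E: "finite E" "card E = n"
  and roots: "\<forall>e\<in>E. poly (char_poly A) e = 0" and r: "r \<in> E"
  shows "poly (pderiv (char_poly A)) r \<noteq> 0"
proof -
  obtain as where cp: "char_poly A = (\<Prod>a\<leftarrow>as. [:- a, 1:])" and len: "length as = n"
    using char_poly_factorized[OF A] by blast
  have "E \<subseteq> set as"
  proof
    fix e assume "e \<in> E"
    then have "poly (\<Prod>a\<leftarrow>as. [:- a, 1:]) e = 0" using roots cp by simp
    then have "(\<Prod>a\<leftarrow>as. e - a) = 0" by (simp add: poly_prod_list o_def)
    then show "e \<in> set as" by (auto simp: prod_list_zero_iff)
  qed
  then have "card E \<le> card (set as)" by (simp add: card_mono)
  moreover have "card (set as) \<le> length as" by (rule card_length)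
  ultimately have "card (set as) = length as" using E len by simp
  then have dist: "distinct as" by (rule card_distinct)
  have "card E = card (set as)" using \<open>card (set as) = length as\<close> E len by simp
  then have Eas: "E = set as" using \<open>E \<subseteq> set as\<close> by (simp add: card_subset_eq)
  have cp2: "char_poly A = (\<Prod>a\<in>set as. [:- a, 1:])" unfolding cp by (rule prod.distinct_set_conv_list[OF dist, symmetric])
  have rs: "r \<in> set as" using r Eas by simp
  define q where "q = (\<Prod>a\<in>set as - {r}. [:- a, 1:])"
  have cp3: "char_poly A = [:- r, 1:] * q" unfolding cp2 q_def using rs by (simp add: prod.remove)
  have "poly q r = (\<Prod>a\<in>set as - {r}. r - a)" by (simp add: q_def poly_prod)
  also have "\<dots> \<noteq> 0" by (simp add: prod_zero_iff)
  finally have "poly q r \<noteq> 0" .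
  moreover have "poly (pderiv ([:- r, 1:] * q)) r = poly q r"
    by (simp only: pderiv_mult poly_add poly_mult) (simp add: pderiv_pCons)
  ultimately show ?thesis unfolding cp3 by simp
qed

lemma sum_shift1: "(\<Sum>j\<in>{1..N}. g j) = (\<Sum>i<N. g (Suc i))"
  by (induct N) (auto simp: atLeastAtMostSuc_conv add.commute)

lemma vnorm_L2: "vnorm I u = L2_set (\<lambda>j. cmod (u j)) I"
  by (simp add: vnorm_def L2_set_def)

lemma vnorm_nonneg: "vnorm I u \<ge> 0"
  unfolding vnorm_def by (rule real_sqrt_ge_zero) (intro sum_nonneg, simp)

lemma vnorm_sq: "(vnorm I u)\<^sup>2 = (\<Sum>j\<in>I. (cmod (u j))\<^sup>2)"
  unfolding vnorm_def by (rule real_sqrt_pow2) (intro sum_nonneg, simp)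

lemma vnorm_scale: "vnorm I (\<lambda>j. u j * a) = cmod a * vnorm I u"
proof -
  have "(\<Sum>j\<in>I. (cmod (u j * a))\<^sup>2) = (cmod a)\<^sup>2 * (\<Sum>j\<in>I. (cmod (u j))\<^sup>2)"
    by (simp add: norm_mult power_mult_distrib sum_distrib_left mult.commute)
  then have "vnorm I (\<lambda>j. u j * a) = sqrt ((cmod a)\<^sup>2 * (\<Sum>j\<in>I. (cmod (u j))\<^sup>2))"
    by (simp only: vnorm_def)
  also have "\<dots> = sqrt ((cmod a)\<^sup>2) * sqrt (\<Sum>j\<in>I. (cmod (u j))\<^sup>2)" by (rule real_sqrt_mult)
  also have "\<dots> = cmod a * vnorm I u" by (simp add: vnorm_def)
  finally show ?thesis .
qed

lemma vinner_CS: "cmod (vinner I u w) \<le> vnorm I u * vnorm I w"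
proof -
  have "cmod (vinner I u w) \<le> (\<Sum>j\<in>I. cmod (u j * cnj (w j)))"
    unfolding vinner_def by (rule norm_sum)
  also have "\<dots> = (\<Sum>j\<in>I. \<bar>cmod (u j)\<bar> * \<bar>cmod (w j)\<bar>)" by (simp add: norm_mult)
  also have "\<dots> \<le> vnorm I u * vnorm I w" unfolding vnorm_L2 by (rule L2_set_mult_ineq)
  finally show ?thesis .
qed

lemma vinner_self: assumes "finite I" shows "vinner I f f = of_real ((vnorm I f)\<^sup>2)"
proof -
  have "vinner I f f = (\<Sum>j\<in>I. complex_of_real ((cmod (f j))\<^sup>2))"
    unfolding vinner_def by (intro sum.cong refl) (rule complex_norm_square[symmetric])
  also have "\<dots> = of_real (\<Sum>j\<in>I. (cmod (f j))\<^sup>2)" by (rule of_real_sum[symmetric])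
  finally show ?thesis by (simp only: vnorm_sq)
qed

lemma key_lower:
  assumes I: "finite I" and u: "vnorm I u = 1" and f: "vinner I f f = 1" and that: "cmod c = 1"
  shows "1 - vnorm I (\<lambda>j. u j - c * f j) \<le> cmod (vinner I u f)"
proof -
  have fn: "vnorm I f = 1"
  proof -
    have "(vnorm I f)\<^sup>2 = 1" using vinner_self[OF I, of f] f by (metis of_real_eq_1_iff)
    then show ?thesis using vnorm_nonneg[of I f] by (simp add: power2_eq_1_iff)
  qed
  have "vinner I u f = vinner I (\<lambda>j. u j - c * f j) f + c * vinner I f f"
    by (simp add: vinner_def sum_distrib_left algebra_simps sum.distrib[symmetric])
  then have "vinner I u f = vinner I (\<lambda>j. u j - c * f j) f + c" using f by simp
  then have "cmod c \<le> cmod (vinner I u f) + cmod (vinner I (\<lambda>j. u j - c * f j) f)"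
    by (metis add_diff_cancel_left' norm_diff_ineq add.commute diff_le_eq)
  moreover have "cmod (vinner I (\<lambda>j. u j - c * f j) f) \<le> vnorm I (\<lambda>j. u j - c * f j)"
    using vinner_CS[of I "\<lambda>j. u j - c * f j" f] fn by simp
  ultimately show ?thesis using that by simp
qed

lemma cmod_diff_sq: "(cmod (x - y))\<^sup>2 = (cmod x)\<^sup>2 + (cmod y)\<^sup>2 - 2 * Re (x * cnj y)"
  by (simp only: cmod_power2) (simp add: power2_eq_square algebra_simps)

lemma phase_dist:
  assumes I: "finite I" and u: "vnorm I u = 1" and f: "vinner I f f = 1" and a: "a = vinner I u f" "a \<noteq> 0"
  shows "(vnorm I (\<lambda>j. u j * (cnj a / cmod a) - f j))\<^sup>2 = 2 - 2 * cmod a"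
proof -
  have fn: "(\<Sum>j\<in>I. (cmod (f j))\<^sup>2) = 1"
    using vinner_self[OF I, of f] f vnorm_sq[of I f] by (metis of_real_eq_1_iff)
  have un: "(\<Sum>j\<in>I. (cmod (u j))\<^sup>2) = 1" using vnorm_sq[of I u] u by simp
  have ca: "cmod (cnj a / cmod a) = 1" using a by (simp add: norm_divide)
  have "(vnorm I (\<lambda>j. u j * (cnj a / cmod a) - f j))\<^sup>2 = (\<Sum>j\<in>I. (cmod (u j * (cnj a / cmod a) - f j))\<^sup>2)"
    by (rule vnorm_sq)
  also have "\<dots> = (\<Sum>j\<in>I. (cmod (u j * (cnj a / cmod a)))\<^sup>2 + (cmod (f j))\<^sup>2 - 2 * Re (u j * (cnj a / cmod a) * cnj (f j)))"
    by (intro sum.cong refl) (rule cmod_diff_sq)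
  also have "\<dots> = (\<Sum>j\<in>I. (cmod (u j * (cnj a / cmod a)))\<^sup>2) + (\<Sum>j\<in>I. (cmod (f j))\<^sup>2) - 2 * Re (\<Sum>j\<in>I. u j * (cnj a / cmod a) * cnj (f j))"
    by (simp add: sum.distrib sum_subtractf Re_sum sum_distrib_left)
  also have "(\<Sum>j\<in>I. (cmod (u j * (cnj a / cmod a)))\<^sup>2) = (\<Sum>j\<in>I. (cmod (u j))\<^sup>2)"
    by (intro sum.cong refl) (simp only: norm_mult ca mult_1_right)
  also have "(\<Sum>j\<in>I. u j * (cnj a / cmod a) * cnj (f j)) = (cnj a / cmod a) * vinner I u f"
    by (simp add: vinner_def sum_distrib_left algebra_simps)
  also have "(cnj a / cmod a) * vinner I u f = of_real (cmod a)"
    using a by (simp add: complex_norm_square[symmetric] power2_eq_square field_simps mult.commute)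
  finally show ?thesis using un fn by simp
qed

lemma smooth_rep:
  fixes v :: "complex \<Rightarrow> complex vec" and T :: "complex set" and fl :: "nat \<Rightarrow> complex"
    and U :: "real \<Rightarrow> nat \<Rightarrow> complex" and B :: "real set"
  assumes T: "open T" "of_real ` B \<subseteq> T"
  and hol: "\<forall>k<N. (\<lambda>z. v z $ k) holomorphic_on T"
  and rel: "\<forall>\<epsilon>\<in>B. \<exists>c. \<forall>i<N. U \<epsilon> (Suc i) = c * v (of_real \<epsilon>) $ i"
  and Un: "\<forall>\<epsilon>\<in>B. vnorm {1..N} (U \<epsilon>) = 1"
  and an: "\<forall>\<epsilon>\<in>B. vinner {1..N} (U \<epsilon>) fl \<noteq> 0"
  and j: "j \<in> {1..N}"
  shows "\<exists>T' H. open T' \<and> of_real ` B \<subseteq> T' \<and> H holomorphic_on T' \<and>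
     (\<forall>\<epsilon>\<in>B. U \<epsilon> j * (cnj (vinner {1..N} (U \<epsilon>) fl) / of_real (cmod (vinner {1..N} (U \<epsilon>) fl))) = H (of_real \<epsilon>))"
proof -
  define Vs where "Vs z k = cnj (v (cnj z) $ k)" for z k
  define N2 where "N2 z = (\<Sum>k<N. v z $ k * Vs z k)" for z
  define Sf where "Sf z = (\<Sum>k<N. v z $ k * cnj (fl (Suc k)))" for z
  define Ss where "Ss z = (\<Sum>k<N. Vs z k * fl (Suc k))" for z
  define G where "G z = N2 z * Sf z * Ss z" for z
  define H where "H z = v z $ (j - 1) * Ss z / csqrt (G z)" for z
  define T1 where "T1 = T \<inter> cnj -` T"
  have oT1: "open T1" unfolding T1_def
    by (intro open_Int T(1) open_vimage) (auto intro: continuous_intros)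
  have holVs: "(\<lambda>z. Vs z k) holomorphic_on T1" if "k < N" for k
  proof -
    have "(\<lambda>z. v z $ k) holomorphic_on cnj ` (cnj -` T)"
      by (rule holomorphic_on_subset[OF hol[rule_format, OF that]]) auto
    then have "cnj \<circ> (\<lambda>z. v z $ k) \<circ> cnj holomorphic_on cnj -` T"
      by (rule holomorphic_on_compose_cnj_cnj) (intro open_vimage T(1), auto intro: continuous_intros)
    moreover have "(\<lambda>z. Vs z k) = cnj \<circ> (\<lambda>z. v z $ k) \<circ> cnj" by (auto simp: Vs_def fun_eq_iff)
    ultimately show ?thesis using holomorphic_on_subset[of _ "cnj -` T" T1] by (auto simp: T1_def)
  qed
  have holv: "(\<lambda>z. v z $ k) holomorphic_on T1" if "k < N" for k
    using hol that holomorphic_on_subset[of _ T T1] by (auto simp: T1_def)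
  have holG: "G holomorphic_on T1"
    unfolding G_def N2_def Sf_def Ss_def
    by (intro holomorphic_intros holVs holv) auto
  define T2 where "T2 = T1 \<inter> G -` (- \<real>\<^sub>\<le>\<^sub>0)"
  have oT2: "open T2" unfolding T2_def
    by (rule continuous_open_preimage[OF holomorphic_on_imp_continuous_on[OF holG] oT1]) auto
  have holH: "H holomorphic_on T2"
  proof -
    have j1: "j - 1 < N" using j by auto
    have T21: "T2 \<subseteq> T1" by (auto simp: T2_def)
    have a1: "(\<lambda>z. v z $ (j - 1)) holomorphic_on T2"
      by (rule holomorphic_on_subset[OF holv[OF j1] T21])
    have "Ss holomorphic_on T1" unfolding Ss_def[abs_def]
      by (intro holomorphic_on_sum holomorphic_on_mult holVs holomorphic_on_const) auto
    then have a2: "Ss holomorphic_on T2" by (rule holomorphic_on_subset[OF _ T21])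
    have "(\<lambda>z. v z $ (j - 1) * Ss z) holomorphic_on T2"
      by (rule holomorphic_on_mult[OF a1 a2])
    moreover have "(\<lambda>z. csqrt (G z)) holomorphic_on T2"
      by (rule holomorphic_on_csqrt') (use holG holomorphic_on_subset[of _ T1 T2] in \<open>auto simp: T2_def\<close>)
    moreover have "csqrt (G z) \<noteq> 0" if "z \<in> T2" for z
      using that by (auto simp: T2_def)
    ultimately show ?thesis unfolding H_def by (rule holomorphic_on_divide)
  qed
  have real_pts: "of_real \<epsilon> \<in> T2 \<and> U \<epsilon> j * (cnj (vinner {1..N} (U \<epsilon>) fl) / of_real (cmod (vinner {1..N} (U \<epsilon>) fl))) = H (of_real \<epsilon>)"
    if e: "\<epsilon> \<in> B" for \<epsilon>
  proof -
    let ?z = "complex_of_real \<epsilon>"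
    let ?vv = "v ?z"
    obtain c where c: "\<forall>i<N. U \<epsilon> (Suc i) = c * ?vv $ i" using rel e by blast
    define nv where "nv = (\<Sum>k<N. (cmod (?vv $ k))\<^sup>2)"
    define s where "s = Sf ?z"
    have Vsr: "Vs ?z k = cnj (?vv $ k)" for k by (simp add: Vs_def)
    have N2r: "N2 ?z = of_real nv"
      unfolding N2_def nv_def Vsr of_real_sum by (intro sum.cong refl) (rule complex_norm_square[symmetric])
    have Ssr: "Ss ?z = cnj s" unfolding Ss_def s_def Sf_def Vsr by (simp add: mult.commute)
    have un: "cmod c ^ 2 * nv = 1"
    proof -
      have "1 = (vnorm {1..N} (U \<epsilon>))\<^sup>2" using Un e by simp
      also have "\<dots> = (\<Sum>i<N. (cmod (U \<epsilon> (Suc i)))\<^sup>2)" by (simp only: vnorm_sq sum_shift1)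
      also have "\<dots> = cmod c ^ 2 * nv" using c by (simp add: nv_def sum_distrib_left norm_mult power_mult_distrib)
      finally show ?thesis by simp
    qed
    have nvpos: "nv > 0"
    proof -
      have "nv \<ge> 0" unfolding nv_def by (intro sum_nonneg) simp
      moreover have "nv \<noteq> 0" using un by auto
      ultimately show ?thesis by simp
    qed
    have a_eq: "vinner {1..N} (U \<epsilon>) fl = c * s"
      unfolding vinner_def sum_shift1 s_def Sf_def using c by (simp add: sum_distrib_left mult.assoc)
    have s0: "s \<noteq> 0" using an e a_eq by auto
    have c0: "c \<noteq> 0" using an e a_eq by auto
    have Gr: "G ?z = of_real (nv * (cmod s)\<^sup>2)"
      unfolding G_def N2r Ssr s_def[symmetric] mult.assoc complex_norm_square[symmetric] by simp
    have Gpos: "nv * (cmod s)\<^sup>2 > 0" using nvpos s0 by simp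
    have inT2: "?z \<in> T2"
    proof -
      have "?z \<in> T" using T(2) e by auto
      moreover have "cnj ?z = ?z" by simp
      ultimately have "?z \<in> T1" by (simp add: T1_def)
      moreover have "G ?z \<notin> \<real>\<^sub>\<le>\<^sub>0" unfolding Gr using Gpos by (simp only: complex_nonpos_Reals_iff Re_complex_of_real) simp
      ultimately show ?thesis by (simp add: T2_def)
    qed
    have sq: "csqrt (G ?z) = of_real (sqrt nv * cmod s)"
      using Gr Gpos by (simp add: real_sqrt_mult)
    have cabs: "cmod c = 1 / sqrt nv"
    proof -
      have "(cmod c * sqrt nv)\<^sup>2 = 1" using un nvpos by (simp add: power_mult_distrib)
      moreover have "cmod c * sqrt nv \<ge> 0" using nvpos by simp
      ultimately have "cmod c * sqrt nv = 1" unfolding power2_eq_1_iff by linarith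
      then show ?thesis using nvpos by (simp add: field_simps)
    qed
    have jj: "j = Suc (j - 1)" "j - 1 < N" using j by auto
    have "U \<epsilon> j = c * ?vv $ (j - 1)" using c jj by metis
    then have "U \<epsilon> j * (cnj (vinner {1..N} (U \<epsilon>) fl) / of_real (cmod (vinner {1..N} (U \<epsilon>) fl)))
        = ?vv $ (j - 1) * cnj s * (c * cnj c) / (of_real (cmod c) * of_real (cmod s))"
      unfolding a_eq by (simp add: norm_mult field_simps)
    also have "c * cnj c = of_real (cmod c) * of_real (cmod c)"
      by (simp add: complex_norm_square[symmetric] power2_eq_square)
    also have "?vv $ (j - 1) * cnj s * (of_real (cmod c) * of_real (cmod c)) / (of_real (cmod c) * of_real (cmod s))
        = ?vv $ (j - 1) * cnj s * of_real (cmod c) / of_real (cmod s)"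
      using c0 by (simp add: field_simps)
    also have "\<dots> = H ?z"
      unfolding H_def sq Ssr s_def[symmetric] cabs using nvpos s0 by (simp add: field_simps)
    finally show ?thesis using inT2 by simp
  qed
  show ?thesis
  proof (intro exI conjI)
    show "open T2" by fact
    show "of_real ` B \<subseteq> T2" using real_pts by auto
    show "H holomorphic_on T2" by fact
    show "\<forall>\<epsilon>\<in>B. U \<epsilon> j * (cnj (vinner {1..N} (U \<epsilon>) fl) / of_real (cmod (vinner {1..N} (U \<epsilon>) fl))) = H (of_real \<epsilon>)"
      using real_pts by blast
  qed
qed

lemma ball_shift1: "(\<forall>i\<in>{1..N}. Q i) \<longleftrightarrow> (\<forall>i<N. Q (Suc i))"
proof
  assume "\<forall>i\<in>{1..N}. Q i" then show "\<forall>i<N. Q (Suc i)" by auto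
next
  assume h: "\<forall>i<N. Q (Suc i)"
  show "\<forall>i\<in>{1..N}. Q i"
  proof
    fix i assume "i \<in> {1..N}"
    then obtain i' where "i = Suc i'" "i' < N" by (cases i) auto
    then show "Q i" using h by simp
  qed
qed

lemma eig_conv:
  fixes A :: "complex mat"
  assumes A: "A \<in> carrier_mat N N" and Aent: "\<And>i j. i < N \<Longrightarrow> j < N \<Longrightarrow> A $$ (i,j) = Q (Suc i) (Suc j)"
  shows "(\<forall>i\<in>{1..N}. (\<Sum>j\<in>{1..N}. Q i j * w j) = \<mu> * w i) \<longleftrightarrow>
     A *\<^sub>v Matrix.vec N (\<lambda>i. w (Suc i)) = \<mu> \<cdot>\<^sub>v Matrix.vec N (\<lambda>i. w (Suc i))"
proof -
  let ?vv = "Matrix.vec N (\<lambda>i. w (Suc i))"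
  have vv: "?vv \<in> carrier_vec N" by simp
  have l: "(\<forall>i\<in>{1..N}. (\<Sum>j\<in>{1..N}. Q i j * w j) = \<mu> * w i) \<longleftrightarrow>
      (\<forall>i<N. (\<Sum>k<N. Q (Suc i) (Suc k) * w (Suc k)) = \<mu> * w (Suc i))"
    by (simp only: ball_shift1 sum_shift1)
  have e: "(A *\<^sub>v ?vv) $ i = (\<Sum>k<N. Q (Suc i) (Suc k) * w (Suc k))" if "i < N" for i
    using mv_index[OF A vv that] that Aent by simp
  have r: "A *\<^sub>v ?vv = \<mu> \<cdot>\<^sub>v ?vv \<longleftrightarrow> (\<forall>i<N. (A *\<^sub>v ?vv) $ i = (\<mu> \<cdot>\<^sub>v ?vv) $ i)"
    using A by (auto simp: vec_eq_iff)
  show ?thesis unfolding l r using e by auto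
qed

lemma eig_root:
  fixes A :: "complex mat"
  assumes A: "A \<in> carrier_mat N N" and Aent: "\<And>i j. i < N \<Longrightarrow> j < N \<Longrightarrow> A $$ (i,j) = Q (Suc i) (Suc j)"
  and ev: "is_eigvec {1..N} Q \<mu> w"
  shows "poly (char_poly A) \<mu> = 0"
proof -
  let ?vv = "Matrix.vec N (\<lambda>i. w (Suc i))"
  from ev obtain j where j: "j \<in> {1..N}" "w j \<noteq> 0" and eq: "\<forall>i\<in>{1..N}. (\<Sum>j\<in>{1..N}. Q i j * w j) = \<mu> * w i"
    unfolding is_eigvec_def by blast
  have "A *\<^sub>v ?vv = \<mu> \<cdot>\<^sub>v ?vv" using eq eig_conv[OF A Aent] by blast
  moreover have "?vv \<noteq> 0\<^sub>v N"
  proof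
    assume "?vv = 0\<^sub>v N"
    moreover have "j - 1 < N" using j by auto
    ultimately have "?vv $ (j - 1) = 0" by simp
    then show False using j by (cases j) auto
  qed
  ultimately have "eigenvector A ?vv \<mu>" using A unfolding eigenvector_def by simp
  then have "eigenvalue A \<mu>" unfolding eigenvalue_def by blast
  then show ?thesis using eigenvalue_root_char_poly[OF A] by simp
qed

lemma Mx_ker:
  fixes C0 C1 :: "complex mat" and u :: "complex vec"
  assumes C0: "C0 \<in> carrier_mat N N" and C1: "C1 \<in> carrier_mat N N" and u: "u \<in> carrier_vec N"
  shows "Mx C0 C1 N (z, \<mu>) *\<^sub>v u = 0\<^sub>v N \<longleftrightarrow> (C0 + z \<cdot>\<^sub>m C1) *\<^sub>v u = \<mu> \<cdot>\<^sub>v u"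
proof -
  have A: "C0 + z \<cdot>\<^sub>m C1 \<in> carrier_mat N N" using C0 C1 by simp
  have e: "(Mx C0 C1 N (z, \<mu>) *\<^sub>v u) $ i = \<mu> * u $ i - ((C0 + z \<cdot>\<^sub>m C1) *\<^sub>v u) $ i" if i: "i < N" for i
  proof -
    have "(Mx C0 C1 N (z, \<mu>) *\<^sub>v u) $ i = (\<Sum>k<N. Mx C0 C1 N (z, \<mu>) $$ (i,k) * u $ k)"
      by (rule mv_index[OF Mx_carr u i])
    also have "\<dots> = (\<Sum>k<N. ((if i = k then \<mu> else 0) - (C0 $$ (i,k) + z * C1 $$ (i,k))) * u $ k)"
      using i by (intro sum.cong refl) (simp add: Mx_index)
    also have "\<dots> = (\<Sum>k<N. (if i = k then \<mu> * u $ k else 0) - (C0 + z \<cdot>\<^sub>m C1) $$ (i,k) * u $ k)"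
      using i C0 C1 by (intro sum.cong refl) (auto simp: algebra_simps)
    also have "\<dots> = (\<Sum>k<N. (if i = k then \<mu> * u $ k else 0)) - (\<Sum>k<N. (C0 + z \<cdot>\<^sub>m C1) $$ (i,k) * u $ k)"
      by (rule sum_subtractf)
    also have "\<dots> = \<mu> * u $ i - ((C0 + z \<cdot>\<^sub>m C1) *\<^sub>v u) $ i"
      using i mv_index[OF A u i] by simp
    finally show ?thesis .
  qed
  show ?thesis
  proof
    assume h: "Mx C0 C1 N (z, \<mu>) *\<^sub>v u = 0\<^sub>v N"
    show "(C0 + z \<cdot>\<^sub>m C1) *\<^sub>v u = \<mu> \<cdot>\<^sub>v u"
    proof (rule eq_vecI)
      fix i assume "i < dim_vec (\<mu> \<cdot>\<^sub>v u)" then have i: "i < N" using u by simp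
      have "(Mx C0 C1 N (z, \<mu>) *\<^sub>v u) $ i = 0" using h i by simp
      then show "((C0 + z \<cdot>\<^sub>m C1) *\<^sub>v u) $ i = (\<mu> \<cdot>\<^sub>v u) $ i"
        unfolding e[OF i] using i u by (simp del: index_mult_mat_vec)
    qed (use C0 C1 u in simp)
  next
    assume h: "(C0 + z \<cdot>\<^sub>m C1) *\<^sub>v u = \<mu> \<cdot>\<^sub>v u"
    show "Mx C0 C1 N (z, \<mu>) *\<^sub>v u = 0\<^sub>v N"
    proof (rule eq_vecI)
      fix i assume "i < dim_vec (0\<^sub>v N :: complex vec)" then have i: "i < N" by simp
      have "((C0 + z \<cdot>\<^sub>m C1) *\<^sub>v u) $ i = \<mu> * u $ i" using h i u by simp
      then show "(Mx C0 C1 N (z, \<mu>) *\<^sub>v u) $ i = 0\<^sub>v N $ i"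
        unfolding e[OF i] using i by (simp del: index_mult_mat_vec)
    qed simp
  qed
qed

theorem proposition4p6:
  fixes S N k :: nat and L :: "nat \<Rightarrow> nat" and Wd :: "nat \<Rightarrow> nat \<Rightarrow> real"
    and \<beta> :: "nat \<Rightarrow> real" and \<gamma>0 :: real
    and lam :: "nat \<Rightarrow> real \<Rightarrow> complex" and f :: "nat \<Rightarrow> nat \<Rightarrow> complex"
  defines "P \<equiv> \<lambda>\<epsilon>. mat_mult {1..N} (Dmat k \<beta> S L) (Weps Wd \<epsilon>)"
    and "Phat \<equiv> mat_mult {1..N} (Dmat k \<beta> S L) (What S L Wd)"
  assumes "1 < S" and "S \<le> N"
    and "band_width S L N"
    and "admissible S L N Wd"
    and "\<beta> \<in> Gamma_set S"
    and "\<gamma>0 > 0"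
    and "\<forall>\<epsilon>\<in>{0<..<\<gamma>0}. inj_on (\<lambda>l. lam l \<epsilon>) {1..N} \<and>
           eigenvalues_on {1..N} (P \<epsilon>) = (\<lambda>l. lam l \<epsilon>) ` {1..N}"
    and "\<forall>l\<in>{1..N}. continuous_on {0<..<\<gamma>0} (lam l)"
    and "\<forall>s\<in>{1..S}. \<forall>l\<in>blk L s. (lam l \<longlongrightarrow> phase k \<beta> s) (at_right 0)"
    and "\<forall>l\<in>{1..N}. \<exists>\<mu>. is_eigvec {1..N} Phat \<mu> (f l)"
    and "\<forall>l\<in>{1..N}. \<forall>m\<in>{1..N}. vinner {1..N} (f l) (f m) = (if l = m then 1 else 0)"
    and "\<forall>l\<in>{1..N}. \<forall>g :: real \<Rightarrow> nat \<Rightarrow> complex.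
           (\<forall>\<epsilon>\<in>{0<..<\<gamma>0}. is_eigvec {1..N} (P \<epsilon>) (lam l \<epsilon>) (g \<epsilon>) \<and> vnorm {1..N} (g \<epsilon>) = 1)
           \<longrightarrow> ((\<lambda>\<epsilon>. INF \<theta>::real. vnorm {1..N} (\<lambda>j. g \<epsilon> j - cis \<theta> * f l j)) \<longlongrightarrow> 0) (at_right 0)"
  shows "\<exists>\<gamma>>0. \<exists>F :: nat \<Rightarrow> real \<Rightarrow> nat \<Rightarrow> complex.
           (\<forall>\<epsilon>\<in>{0<..<\<gamma>}. \<forall>l\<in>{1..N}. vnorm {1..N} (F l \<epsilon>) = 1 \<and>
               (\<forall>i\<in>{1..N}. (\<Sum>j\<in>{1..N}. P \<epsilon> i j * F l \<epsilon> j) = lam l \<epsilon> * F l \<epsilon> i)) \<and>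
           (\<forall>l\<in>{1..N}. (\<forall>j\<in>{1..N}. smooth_on {0<..<\<gamma>} (\<lambda>\<epsilon>. F l \<epsilon> j)) \<and>
               ((\<lambda>\<epsilon>. vnorm {1..N} (\<lambda>j. F l \<epsilon> j - f l j)) \<longlongrightarrow> 0) (at_right 0))"
proof -
  let ?I = "{1..N::nat}"
  have finI: "finite ?I" by simp
  define C0 where "C0 = Matrix.mat N N (\<lambda>(i,j). \<Sum>m\<in>{1..N}. Dmat k \<beta> S L (Suc i) m * (if m = Suc j then 1 else 0))"
  define C1 where "C1 = Matrix.mat N N (\<lambda>(i,j). \<Sum>m\<in>{1..N}. Dmat k \<beta> S L (Suc i) m * complex_of_real (Wd m (Suc j)))"
  have C0c: "C0 \<in> carrier_mat N N" by (simp add: C0_def)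
  have C1c: "C1 \<in> carrier_mat N N" by (simp add: C1_def)
  have Pent: "(C0 + complex_of_real \<epsilon> \<cdot>\<^sub>m C1) $$ (i,j) = P \<epsilon> (Suc i) (Suc j)" if "i < N" "j < N" for \<epsilon> i j
    using that C0c C1c
    by (simp add: P_def mat_mult_def Weps_def C0_def C1_def distrib_left sum.distrib sum_distrib_left algebra_simps)
  have Ac: "C0 + complex_of_real \<epsilon> \<cdot>\<^sub>m C1 \<in> carrier_mat N N" for \<epsilon> using C0c C1c by simp
  have EC: "(\<forall>i\<in>{1..N}. (\<Sum>j\<in>{1..N}. P \<epsilon> i j * w j) = \<mu> * w i) \<longleftrightarrow>
     (C0 + complex_of_real \<epsilon> \<cdot>\<^sub>m C1) *\<^sub>v Matrix.vec N (\<lambda>i. w (Suc i)) = \<mu> \<cdot>\<^sub>v Matrix.vec N (\<lambda>i. w (Suc i))" for \<epsilon> w \<mu>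
    by (rule eig_conv[OF Ac]) (simp add: Pent)
  have ex_unit: "\<exists>u. is_eigvec ?I (P \<epsilon>) (lam l \<epsilon>) u \<and> vnorm ?I u = 1" if e: "\<epsilon> \<in> {0<..<\<gamma>0}" and l: "l \<in> ?I" for \<epsilon> l
  proof -
    have "lam l \<epsilon> \<in> eigenvalues_on ?I (P \<epsilon>)" using assms(9) e l by blast
    then obtain w where w: "is_eigvec ?I (P \<epsilon>) (lam l \<epsilon>) w" unfolding eigenvalues_on_def by blast
    then obtain j0 where j0: "j0 \<in> ?I" "w j0 \<noteq> 0"
      and eq: "\<forall>i\<in>?I. (\<Sum>j\<in>?I. P \<epsilon> i j * w j) = lam l \<epsilon> * w i" unfolding is_eigvec_def by blast
    have "(\<Sum>j\<in>?I. (cmod (w j))\<^sup>2) > 0" by (rule sum_pos2[OF finI j0(1)]) (use j0 in auto)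
    then have np: "vnorm ?I w > 0" unfolding vnorm_def by simp
    define c where "c = 1 / complex_of_real (vnorm ?I w)"
    have c0: "c \<noteq> 0" using np by (simp add: c_def)
    have "(\<Sum>j\<in>?I. P \<epsilon> i j * (w j * c)) = (\<Sum>j\<in>?I. P \<epsilon> i j * w j) * c" for i
      by (simp add: sum_distrib_right mult.assoc)
    then have "is_eigvec ?I (P \<epsilon>) (lam l \<epsilon>) (\<lambda>j. w j * c)"
      unfolding is_eigvec_def using j0 c0 eq by auto
    moreover have "vnorm ?I (\<lambda>j. w j * c) = 1" using vnorm_scale[of ?I w c] np by (simp add: c_def norm_divide)
    ultimately show ?thesis by blast
  qed
  define U where "U l \<epsilon> = (SOME u. is_eigvec ?I (P \<epsilon>) (lam l \<epsilon>) u \<and> vnorm ?I u = 1)" for l \<epsilon>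
  have Uprop: "is_eigvec ?I (P \<epsilon>) (lam l \<epsilon>) (U l \<epsilon>) \<and> vnorm ?I (U l \<epsilon>) = 1" if "\<epsilon> \<in> {0<..<\<gamma>0}" "l \<in> ?I" for \<epsilon> l
    unfolding U_def by (rule someI_ex[OF ex_unit[OF that]])
  define D where "D l \<epsilon> = (INF \<theta>::real. vnorm ?I (\<lambda>j. U l \<epsilon> j - cis \<theta> * f l j))" for l \<epsilon>
  have Dlim: "((\<lambda>\<epsilon>. D l \<epsilon>) \<longlongrightarrow> 0) (at_right 0)" if l: "l \<in> ?I" for l
  proof -
    have "\<forall>\<epsilon>\<in>{0<..<\<gamma>0}. is_eigvec ?I (P \<epsilon>) (lam l \<epsilon>) (U l \<epsilon>) \<and> vnorm ?I (U l \<epsilon>) = 1"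
      using Uprop l by blast
    then show ?thesis using assms(14) l unfolding D_def by blast
  qed
  have D\<theta>: "\<exists>\<theta>. vnorm ?I (\<lambda>j. U l \<epsilon> j - cis \<theta> * f l j) < e" if "D l \<epsilon> < e" for l \<epsilon> e
  proof -
    have "Inf (range (\<lambda>\<theta>::real. vnorm ?I (\<lambda>j. U l \<epsilon> j - cis \<theta> * f l j))) < e" using that by (simp add: D_def)
    then show ?thesis using cInf_lessD[of "range (\<lambda>\<theta>::real. vnorm ?I (\<lambda>j. U l \<epsilon> j - cis \<theta> * f l j))" e] by auto
  qed
  have ff: "vinner ?I (f l) (f l) = 1" if "l \<in> ?I" for l using assms(13) that by simp
  have lower: "cmod (vinner ?I (U l \<epsilon>) (f l)) > 1 - e" if h: "\<epsilon> \<in> {0<..<\<gamma>0}" "l \<in> ?I" "D l \<epsilon> < e" for l \<epsilon> e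
  proof -
    obtain \<theta> where \<theta>: "vnorm ?I (\<lambda>j. U l \<epsilon> j - cis \<theta> * f l j) < e" using D\<theta> h(3) by blast
    have "1 - vnorm ?I (\<lambda>j. U l \<epsilon> j - cis \<theta> * f l j) \<le> cmod (vinner ?I (U l \<epsilon>) (f l))"
      by (rule key_lower[OF finI]) (use Uprop[OF h(1,2)] ff[OF h(2)] in auto)
    then show ?thesis using \<theta> by linarith
  qed
  have "\<forall>\<^sub>F \<epsilon> in at_right 0. \<forall>l\<in>?I. D l \<epsilon> < 1/4"
  proof (rule eventually_ball_finite[OF finI], rule ballI)
    fix l assume "l \<in> ?I"
    show "\<forall>\<^sub>F \<epsilon> in at_right 0. D l \<epsilon> < 1/4"
      by (rule order_tendstoD(2)[OF Dlim[OF \<open>l \<in> ?I\<close>]]) simp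
  qed
  then obtain b where b: "b > 0" "\<forall>\<epsilon>>0. \<epsilon> < b \<longrightarrow> (\<forall>l\<in>?I. D l \<epsilon> < 1/4)"
    unfolding eventually_at_right_field by blast
  define \<gamma> where "\<gamma> = min \<gamma>0 b"
  have \<gamma>pos: "\<gamma> > 0" using b assms(8) by (simp add: \<gamma>_def)
  have \<gamma>sub: "\<epsilon> \<in> {0<..<\<gamma>0}" if "\<epsilon> \<in> {0<..<\<gamma>}" for \<epsilon> using that by (auto simp: \<gamma>_def)
  define a where "a l \<epsilon> = vinner ?I (U l \<epsilon>) (f l)" for l \<epsilon>
  define Fn where "Fn l \<epsilon> = (\<lambda>j. U l \<epsilon> j * (cnj (a l \<epsilon>) / complex_of_real (cmod (a l \<epsilon>))))" for l \<epsilon>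
  have a_big: "cmod (a l \<epsilon>) > 3/4" if "\<epsilon> \<in> {0<..<\<gamma>}" "l \<in> ?I" for l \<epsilon>
  proof -
    have "D l \<epsilon> < 1/4" using b(2) that by (auto simp: \<gamma>_def)
    then show ?thesis using lower[of \<epsilon> l "1/4"] that \<gamma>sub by (simp add: a_def)
  qed
  have a0: "a l \<epsilon> \<noteq> 0" if "\<epsilon> \<in> {0<..<\<gamma>}" "l \<in> ?I" for l \<epsilon> using a_big[OF that] by auto
  have P1: "\<forall>\<epsilon>\<in>{0<..<\<gamma>}. \<forall>l\<in>?I. vnorm ?I (Fn l \<epsilon>) = 1 \<and>
               (\<forall>i\<in>?I. (\<Sum>j\<in>?I. P \<epsilon> i j * Fn l \<epsilon> j) = lam l \<epsilon> * Fn l \<epsilon> i)"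
  proof (intro ballI conjI)
    fix \<epsilon> l assume e: "\<epsilon> \<in> {0<..<\<gamma>}" and l: "l \<in> ?I"
    have U: "is_eigvec ?I (P \<epsilon>) (lam l \<epsilon>) (U l \<epsilon>)" "vnorm ?I (U l \<epsilon>) = 1" using Uprop \<gamma>sub[OF e] l by auto
    let ?c = "cnj (a l \<epsilon>) / complex_of_real (cmod (a l \<epsilon>))"
    have cn: "cmod ?c = 1" using a0[OF e l] by (simp add: norm_divide)
    show "vnorm ?I (Fn l \<epsilon>) = 1" unfolding Fn_def using vnorm_scale[of ?I "U l \<epsilon>" ?c] U cn by simp
    fix i assume i: "i \<in> ?I"
    have "(\<Sum>j\<in>?I. P \<epsilon> i j * Fn l \<epsilon> j) = (\<Sum>j\<in>?I. P \<epsilon> i j * U l \<epsilon> j) * ?c"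
      unfolding Fn_def by (simp only: sum_distrib_right mult.assoc)
    also have "\<dots> = lam l \<epsilon> * U l \<epsilon> i * ?c" using U(1) i unfolding is_eigvec_def by simp
    finally show "(\<Sum>j\<in>?I. P \<epsilon> i j * Fn l \<epsilon> j) = lam l \<epsilon> * Fn l \<epsilon> i" by (simp add: Fn_def mult.assoc)
  qed
  have P3: "((\<lambda>\<epsilon>. vnorm ?I (\<lambda>j. Fn l \<epsilon> j - f l j)) \<longlongrightarrow> 0) (at_right 0)" if l: "l \<in> ?I" for l
  proof (rule tendstoI)
    fix e :: real assume e: "e > 0"
    have ev1: "\<forall>\<^sub>F \<epsilon> in at_right 0. D l \<epsilon> < e\<^sup>2/2"
      by (rule order_tendstoD(2)[OF Dlim[OF l]]) (use e in simp)
    have ev2: "\<forall>\<^sub>F \<epsilon> in at_right 0. \<epsilon> \<in> {0<..<\<gamma>}"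
      unfolding eventually_at_right_field using \<gamma>pos by auto
    show "\<forall>\<^sub>F \<epsilon> in at_right 0. dist (vnorm ?I (\<lambda>j. Fn l \<epsilon> j - f l j)) 0 < e"
      using ev1 ev2
    proof eventually_elim
      case (elim \<epsilon>)
      have low: "cmod (a l \<epsilon>) > 1 - e\<^sup>2/2" using lower[of \<epsilon> l "e\<^sup>2/2"] elim \<gamma>sub l by (simp add: a_def)
      have "(vnorm ?I (\<lambda>j. Fn l \<epsilon> j - f l j))\<^sup>2 = 2 - 2 * cmod (a l \<epsilon>)"
        unfolding Fn_def by (rule phase_dist[OF finI]) (use Uprop \<gamma>sub elim l ff a0 in \<open>auto simp: a_def\<close>)
      then have "(vnorm ?I (\<lambda>j. Fn l \<epsilon> j - f l j))\<^sup>2 < e\<^sup>2" using low by simp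
      then have "vnorm ?I (\<lambda>j. Fn l \<epsilon> j - f l j) < e"
        by (rule power_less_imp_less_base) (use e in simp)
      then show ?case using vnorm_nonneg by simp
    qed
  qed
  have P2: "smooth_on {0<..<\<gamma>} (\<lambda>\<epsilon>. Fn l \<epsilon> j)" if l: "l \<in> ?I" and j: "j \<in> ?I" for l j
  proof (rule smooth_local)
    fix \<epsilon>0 assume e0: "\<epsilon>0 \<in> {0<..<\<gamma>}"
    have e0': "\<epsilon>0 \<in> {0<..<\<gamma>0}" using \<gamma>sub[OF e0] .
    define r where "r = min \<epsilon>0 (\<gamma>0 - \<epsilon>0)"
    have r: "r > 0" using e0' by (auto simp: r_def)
    have rb: "ball \<epsilon>0 r \<subseteq> {0<..<\<gamma>0}" by (auto simp: r_def dist_real_def ball_def)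
    have cont: "isCont (lam l) \<epsilon>0"
      using continuous_on_interior[OF assms(10)[rule_format, OF l]] e0' by (simp add: interior_open)
    have root: "\<forall>\<epsilon>\<in>ball \<epsilon>0 r. poly (char_poly (C0 + complex_of_real \<epsilon> \<cdot>\<^sub>m C1)) (lam l \<epsilon>) = 0"
    proof
      fix \<epsilon> assume "\<epsilon> \<in> ball \<epsilon>0 r" then have e: "\<epsilon> \<in> {0<..<\<gamma>0}" using rb by auto
      show "poly (char_poly (C0 + complex_of_real \<epsilon> \<cdot>\<^sub>m C1)) (lam l \<epsilon>) = 0"
        by (rule eig_root[OF Ac Pent]) (use Uprop[OF e l] in auto)
    qed
    have simple: "poly (pderiv (char_poly (C0 + complex_of_real \<epsilon>0 \<cdot>\<^sub>m C1))) (lam l \<epsilon>0) \<noteq> 0"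
    proof (rule simple_root[OF Ac, where E="(\<lambda>m. lam m \<epsilon>0) ` ?I"])
      show "finite ((\<lambda>m. lam m \<epsilon>0) ` ?I)" by simp
      have "inj_on (\<lambda>m. lam m \<epsilon>0) ?I" using assms(9) e0' by blast
      then show "card ((\<lambda>m. lam m \<epsilon>0) ` ?I) = N" by (simp add: card_image)
      show "\<forall>e\<in>(\<lambda>m. lam m \<epsilon>0) ` ?I. poly (char_poly (C0 + complex_of_real \<epsilon>0 \<cdot>\<^sub>m C1)) e = 0"
      proof
        fix e assume "e \<in> (\<lambda>m. lam m \<epsilon>0) ` ?I"
        then have "e \<in> eigenvalues_on ?I (P \<epsilon>0)" using assms(9) e0' by blast
        then obtain w where w: "is_eigvec ?I (P \<epsilon>0) e w" unfolding eigenvalues_on_def by blast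
        show "poly (char_poly (C0 + complex_of_real \<epsilon>0 \<cdot>\<^sub>m C1)) e = 0"
          by (rule eig_root[OF Ac Pent]) (use w in auto)
      qed
      show "lam l \<epsilon>0 \<in> (\<lambda>m. lam m \<epsilon>0) ` ?I" using l by simp
    qed
    obtain \<delta> T and v :: "complex \<Rightarrow> complex vec" where \<delta>: "\<delta> > 0" and T: "open T" "of_real ` ball \<epsilon>0 \<delta> \<subseteq> T"
      and hol: "\<forall>k<N. (\<lambda>z. v z $ k) holomorphic_on T" and vc: "\<forall>z. v z \<in> carrier_vec N"
      and vprop: "\<forall>\<epsilon>\<in>ball \<epsilon>0 \<delta>. v (of_real \<epsilon>) \<noteq> 0\<^sub>v N \<and> Mx C0 C1 N (of_real \<epsilon>, lam l \<epsilon>) *\<^sub>v v (of_real \<epsilon>) = 0\<^sub>v N \<and>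
        (\<forall>u\<in>carrier_vec N. Mx C0 C1 N (of_real \<epsilon>, lam l \<epsilon>) *\<^sub>v u = 0\<^sub>v N \<longrightarrow> (\<exists>c. u = c \<cdot>\<^sub>v v (of_real \<epsilon>)))"
      using core[OF C0c C1c r cont root simple] by blast
    define \<delta>' where "\<delta>' = min \<delta> (min \<epsilon>0 (\<gamma> - \<epsilon>0))"
    have \<delta>': "\<delta>' > 0" using \<delta> e0 by (auto simp: \<delta>'_def)
    have B1: "ball \<epsilon>0 \<delta>' \<subseteq> ball \<epsilon>0 \<delta>" by (auto simp: \<delta>'_def)
    have B2: "ball \<epsilon>0 \<delta>' \<subseteq> {0<..<\<gamma>}" by (auto simp: \<delta>'_def dist_real_def ball_def)
    have rel: "\<forall>\<epsilon>\<in>ball \<epsilon>0 \<delta>'. \<exists>c. \<forall>i<N. U l \<epsilon> (Suc i) = c * v (of_real \<epsilon>) $ i"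
    proof
      fix \<epsilon> assume e: "\<epsilon> \<in> ball \<epsilon>0 \<delta>'"
      have e\<gamma>: "\<epsilon> \<in> {0<..<\<gamma>}" using B2 e by (rule subsetD)
      have e\<gamma>0: "\<epsilon> \<in> {0<..<\<gamma>0}" by (rule \<gamma>sub[OF e\<gamma>])
      have Ue: "is_eigvec ?I (P \<epsilon>) (lam l \<epsilon>) (U l \<epsilon>)" using Uprop[OF e\<gamma>0 l] by simp
      define uv where "uv = Matrix.vec N (\<lambda>i. U l \<epsilon> (Suc i))"
      have uvc: "uv \<in> carrier_vec N" by (simp add: uv_def)
      have eqU: "\<forall>i\<in>?I. (\<Sum>j\<in>?I. P \<epsilon> i j * U l \<epsilon> j) = lam l \<epsilon> * U l \<epsilon> i"
        using Ue unfolding is_eigvec_def by blast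
      have "(C0 + complex_of_real \<epsilon> \<cdot>\<^sub>m C1) *\<^sub>v uv = lam l \<epsilon> \<cdot>\<^sub>v uv"
        unfolding uv_def by (rule EC[THEN iffD1, OF eqU])
      then have M0: "Mx C0 C1 N (of_real \<epsilon>, lam l \<epsilon>) *\<^sub>v uv = 0\<^sub>v N"
        by (rule Mx_ker[OF C0c C1c uvc, THEN iffD2])
      have e\<delta>: "\<epsilon> \<in> ball \<epsilon>0 \<delta>" using B1 e by (rule subsetD)
      have "\<forall>u\<in>carrier_vec N. Mx C0 C1 N (of_real \<epsilon>, lam l \<epsilon>) *\<^sub>v u = 0\<^sub>v N \<longrightarrow> (\<exists>c. u = c \<cdot>\<^sub>v v (of_real \<epsilon>))"
        by (rule conjunct2[OF conjunct2[OF bspec[OF vprop e\<delta>]]])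
      then have "\<exists>c. uv = c \<cdot>\<^sub>v v (of_real \<epsilon>)" using uvc M0 by (metis (no_types, lifting))
      then obtain c where c: "uv = c \<cdot>\<^sub>v v (of_real \<epsilon>)" by (elim exE)
      have d: "dim_vec (v (of_real \<epsilon>)) = N" using vc carrier_vecD by blast
      have "U l \<epsilon> (Suc i) = c * v (of_real \<epsilon>) $ i" if "i < N" for i
      proof -
        have "U l \<epsilon> (Suc i) = uv $ i" using that by (simp add: uv_def)
        also have "\<dots> = (c \<cdot>\<^sub>v v (of_real \<epsilon>)) $ i" by (simp only: c)
        also have "\<dots> = c * v (of_real \<epsilon>) $ i" by (rule index_smult_vec(1)) (simp add: d that)
        finally show ?thesis .
      qed
      then show "\<exists>c. \<forall>i<N. U l \<epsilon> (Suc i) = c * v (of_real \<epsilon>) $ i" by blast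
    qed
    have Un: "\<forall>\<epsilon>\<in>ball \<epsilon>0 \<delta>'. vnorm ?I (U l \<epsilon>) = 1"
    proof
      fix \<epsilon> assume "\<epsilon> \<in> ball \<epsilon>0 \<delta>'"
      then have "\<epsilon> \<in> {0<..<\<gamma>0}" using B2 \<gamma>sub by blast
      then show "vnorm ?I (U l \<epsilon>) = 1" using Uprop l by blast
    qed
    have an: "\<forall>\<epsilon>\<in>ball \<epsilon>0 \<delta>'. vinner ?I (U l \<epsilon>) (f l) \<noteq> 0"
    proof
      fix \<epsilon> assume "\<epsilon> \<in> ball \<epsilon>0 \<delta>'"
      then have "\<epsilon> \<in> {0<..<\<gamma>}" using B2 by blast
      then show "vinner ?I (U l \<epsilon>) (f l) \<noteq> 0" using a0 l unfolding a_def by blast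
    qed
    have TB: "of_real ` ball \<epsilon>0 \<delta>' \<subseteq> T" using T(2) B1 by auto
    obtain T' H where TH: "open T'" "of_real ` ball \<epsilon>0 \<delta>' \<subseteq> T'" "H holomorphic_on T'"
      "\<forall>\<epsilon>\<in>ball \<epsilon>0 \<delta>'. U l \<epsilon> j * (cnj (vinner ?I (U l \<epsilon>) (f l)) / of_real (cmod (vinner ?I (U l \<epsilon>) (f l)))) = H (of_real \<epsilon>)"
      using smooth_rep[OF T(1) TB hol rel Un an j] by blast
    have "\<forall>y\<in>ball \<epsilon>0 \<delta>'. Fn l y j = H (of_real y)"
      using TH(4) unfolding Fn_def a_def by simp
    then show "\<exists>\<delta>>0. \<exists>T h. open T \<and> of_real ` ball \<epsilon>0 \<delta> \<subseteq> T \<and> h holomorphic_on T \<and>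
                   (\<forall>y\<in>ball \<epsilon>0 \<delta>. Fn l y j = h (of_real y))"
      using \<delta>' TH(1-3) by blast
  qed
  show ?thesis
  proof (intro exI[of _ \<gamma>] conjI exI[of _ Fn])
    show "\<gamma> > 0" by fact
    show "\<forall>\<epsilon>\<in>{0<..<\<gamma>}. \<forall>l\<in>?I. vnorm ?I (Fn l \<epsilon>) = 1 \<and>
               (\<forall>i\<in>?I. (\<Sum>j\<in>?I. P \<epsilon> i j * Fn l \<epsilon> j) = lam l \<epsilon> * Fn l \<epsilon> i)" by (rule P1)
    show "\<forall>l\<in>?I. (\<forall>j\<in>?I. smooth_on {0<..<\<gamma>} (\<lambda>\<epsilon>. Fn l \<epsilon> j)) \<and>
               ((\<lambda>\<epsilon>. vnorm ?I (\<lambda>j. Fn l \<epsilon> j - f l j)) \<longlongrightarrow> 0) (at_right 0)"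
      using P2 P3 by blast
  qed
qed

end
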